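(* Assume that $A$ is compatible. Let $f,g\in\mathcal{S}(\Omega)$. If $x\in\Omega$ is real and $x\in V(f)\cup V(g)$, then $x\in V(f\cdot g)$. More generally: (1) If $\mathbb{S}_x\subseteq V(f)$ or $\mathbb{S}_x\subseteq V(g)$, then $\mathbb{S}_x\subseteq V(f\cdot g)$. If $x\in\Omega\setminus\mathbb{R}$ and $f'_s(x)$, $g'_s(x)$ and $(f\cdot g)'_s(x)$ belong to $C_A$, then: (2) If $\mathbb{S}_x\cap V(f)$ is a singleton $\{y\}$ and $\mathbb{S}_x\cap V(g)=\emptyset$, then $\mathbb{S}_x\cap V(f\cdot g)\subseteq\{w\}$, with \[w=\big((yf'_s(x))g^\circ_s(x)-(y\,\mathrm{im}(y)f'_s(x))g'_s(x)\big)\big(f'_s(x)g^\circ_s(x)-(\mathrm{im}(y)f'_s(x))g'_s(x)\big)^{-1}.\] (3) If $\mathbb{S}_x\cap V(f)=\emptyset$ and $\mathbb{S}_x\cap V(g)$ is a singleton $\{z\}$, then $\mathbb{S}_x\cap V(f\cdot g)\subseteq\{w\}$, with \[w=\big(f^\circ_s(x)(zg'_s(x))-f'_s(x)(z\,\mathrm{im}(z)g'_s(x))\big)\big(f^\circ_s(x)g'_s(x)-f'_s(x)(\mathrm{im}(z)g'_s(x))\big)^{-1}.\] (4) If $\mathbb{S}_x\cap V(f)=\{y\}$ and $\mathbb{S}_x\cap V(g)=\{z\}$ for some $y,z\in\mathbb{S}_x$, then either (a) $\mathbb{S}_x\subseteq V(f\cdot g)$, or (b) $\mathbb{S}_x\cap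 V(f\cdot g)\subseteq\{w\}$ with \[w=\big(n(x)f'_s(x)g'_s(x)-(yf'_s(x))(zg'_s(x))\big)\big((f\cdot g)'_s(x)\big)^{-1},\] depending on whether or not $(f\cdot g)'_s(x)=(y^cf'_s(x))g'_s(x)-f'_s(x)(zg'_s(x))$ vanishes.
   Context: Let $A$ be a finite-dimensional real algebra with unit $1$ ($\mathbb{R}$ identified with $\mathbb{R}1$) which is alternative (the associator $(x,y,z)=(xy)z-x(yz)$ is alternating), with a $^*$-involution $x\mapsto x^c$ (real linear, $(x^c)^c=x$, $(xy)^c=y^cx^c$, $r^c=r$ for $r\in\mathbb{R}$). Let $t(x)=x+x^c$, $n(x)=xx^c$. Nucleus: $\{r:(r,a,b)=0\ \forall a,b\}$; $A$ is compatible if $t$ takes values in the nucleus. Center: $\{r$ in nucleus$: ra=ar\ \forall a\}$; $C_A=\{0\}\cup\{a:n(a),n(a^c)$ invertible elements of the center$\}$. $\mathbb{S}_A=\{J\in A:t(J)=0,n(J)=1\}$ (assumed non-empty), $Q_A=\mathbb{R}\cup\{x:t(x),n(x)\in\mathbb{R},4n(x)>t(x)^2\}$; every $x\in Q_A$ is $\alpha+\beta J$ with $\alpha,\beta\in\mathbb{R}$, $J\in\mathbb{S}_A$; $x^c=\alpha-\beta J$, $\mathrm{re}(x)=t(x)/2$, $\mathrm{im}(x)=x-\mathrm{re}(x)$, $\mathbb{S}_x=\{\alpha+\beta I:I\in\mathbb{S}_A\}$. Let $D\subseteq\mathbb{C}$ be non-empty, invariant under conjugation, $\Omega=\{\alpha+\beta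 J:\alpha+i\beta\in D,J\in\mathbb{S}_A\}$. $A_{\mathbb{C}}=\{a+\imath b\}$ with $(a+\imath b)(a'+\imath b')=aa'-bb'+\imath(ab'+ba')$, $\overline{a+\imath b}=a-\imath b$. A stem function $F=F_1+\imath F_2:D\to A_{\mathbb{C}}$ satisfies $F(\bar z)=\overline{F(z)}$ and induces the slice function $f=\mathcal{I}(F)$, $f(\alpha+\beta J)=F_1(\alpha+i\beta)+JF_2(\alpha+i\beta)$; $\mathcal{S}(\Omega)$ is the set of slice functions; slice product $f\cdot g=\mathcal{I}(FG)$. $V(h)=\{x:h(x)=0\}$. $f^\circ_s(x)=\frac12(f(x)+f(x^c))$, $f'_s(x)=\frac12\mathrm{im}(x)^{-1}(f(x)-f(x^c))$ for $x\in\Omega\setminus\mathbb{R}$. *)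

theory Defs
  imports "HOL-Analysis.Analysis"
begin

text \<open>A finite-dimensional real algebra is modelled as a type of class euclidean_space
(any finite-dimensional real vector space) with unit u, multiplication M and involution c.
The real number r is identified with r *R u.\<close>

definition assoc :: "('a::real_vector \<Rightarrow> 'a \<Rightarrow> 'a) \<Rightarrow> 'a \<Rightarrow> 'a \<Rightarrow> 'a \<Rightarrow> 'a" where
  "assoc M x y z = M (M x y) z - M x (M y z)"

definition alt_star_algebra :: "'a::euclidean_space \<Rightarrow> ('a \<Rightarrow> 'a \<Rightarrow> 'a) \<Rightarrow> ('a \<Rightarrow> 'a) \<Rightarrow> bool" where
  "alt_star_algebra u M c \<longleftrightarrow>
     bilinear M \<and> (\<forall>x. M u x = x \<and> M x u = x) \<and>
     (\<forall>x y. assoc M x x y = 0 \<and> assoc M x y x = 0 \<and> assoc M y x x = 0) \<and>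
     linear c \<and> (\<forall>x. c (c x) = x) \<and> (\<forall>x y. c (M x y) = M (c y) (c x)) \<and>
     (\<forall>r. c (r *\<^sub>R u) = r *\<^sub>R u)"

definition realA :: "'a::real_vector \<Rightarrow> 'a set" where
  "realA u = range (\<lambda>r. r *\<^sub>R u)"

definition tr :: "('a::real_vector \<Rightarrow> 'a) \<Rightarrow> 'a \<Rightarrow> 'a" where
  "tr c x = x + c x"

definition nm :: "('a::real_vector \<Rightarrow> 'a \<Rightarrow> 'a) \<Rightarrow> ('a \<Rightarrow> 'a) \<Rightarrow> 'a \<Rightarrow> 'a" where
  "nm M c x = M x (c x)"

definition nucleus :: "('a::real_vector \<Rightarrow> 'a \<Rightarrow> 'a) \<Rightarrow> 'a set" where
  "nucleus M = {r. \<forall>a b. assoc M r a b = 0}"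

definition compatible :: "('a::real_vector \<Rightarrow> 'a \<Rightarrow> 'a) \<Rightarrow> ('a \<Rightarrow> 'a) \<Rightarrow> bool" where
  "compatible M c \<longleftrightarrow> (\<forall>x. tr c x \<in> nucleus M)"

definition center :: "('a::real_vector \<Rightarrow> 'a \<Rightarrow> 'a) \<Rightarrow> 'a set" where
  "center M = {r \<in> nucleus M. \<forall>a. M r a = M a r}"

definition invertible_el :: "'a \<Rightarrow> ('a \<Rightarrow> 'a \<Rightarrow> 'a) \<Rightarrow> 'a \<Rightarrow> bool" where
  "invertible_el u M a \<longleftrightarrow> (\<exists>b. M a b = u \<and> M b a = u)"

text \<open>The (two-sided) inverse; only meaningful for invertible elements.\<close>
definition ainv :: "'a \<Rightarrow> ('a \<Rightarrow> 'a \<Rightarrow> 'a) \<Rightarrow> 'a \<Rightarrow> 'a" where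
  "ainv u M a = (SOME b. M a b = u \<and> M b a = u)"

definition CA :: "'a::real_vector \<Rightarrow> ('a \<Rightarrow> 'a \<Rightarrow> 'a) \<Rightarrow> ('a \<Rightarrow> 'a) \<Rightarrow> 'a set" where
  "CA u M c = {0} \<union> {a. nm M c a \<in> center M \<and> invertible_el u M (nm M c a) \<and>
                          nm M c (c a) \<in> center M \<and> invertible_el u M (nm M c (c a))}"

definition SA :: "'a::real_vector \<Rightarrow> ('a \<Rightarrow> 'a \<Rightarrow> 'a) \<Rightarrow> ('a \<Rightarrow> 'a) \<Rightarrow> 'a set" where
  "SA u M c = {J. tr c J = 0 \<and> nm M c J = u}"

definition re :: "('a::real_vector \<Rightarrow> 'a) \<Rightarrow> 'a \<Rightarrow> 'a" where
  "re c x = (1/2) *\<^sub>R tr c x"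

definition im :: "('a::real_vector \<Rightarrow> 'a) \<Rightarrow> 'a \<Rightarrow> 'a" where
  "im c x = x - re c x"

definition Omega :: "'a::real_vector \<Rightarrow> ('a \<Rightarrow> 'a \<Rightarrow> 'a) \<Rightarrow> ('a \<Rightarrow> 'a) \<Rightarrow> complex set \<Rightarrow> 'a set" where
  "Omega u M c D = {a *\<^sub>R u + b *\<^sub>R J | a b J. Complex a b \<in> D \<and> J \<in> SA u M c}"

definition sphere :: "'a::real_vector \<Rightarrow> ('a \<Rightarrow> 'a \<Rightarrow> 'a) \<Rightarrow> ('a \<Rightarrow> 'a) \<Rightarrow> 'a \<Rightarrow> 'a set" where
  "sphere u M c x = {a *\<^sub>R u + b *\<^sub>R I | a b I. I \<in> SA u M c \<and>
                        (\<exists>J \<in> SA u M c. x = a *\<^sub>R u + b *\<^sub>R J)}"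

text \<open>Stem functions D -> A_C, with A_C = A x A (F = F1 + i F2).\<close>
definition stem :: "complex set \<Rightarrow> (complex \<Rightarrow> 'a::real_vector \<times> 'a) \<Rightarrow> bool" where
  "stem D F \<longleftrightarrow> (\<forall>z\<in>D. F (cnj z) = (fst (F z), - snd (F z)))"

definition induces :: "'a::real_vector \<Rightarrow> ('a \<Rightarrow> 'a \<Rightarrow> 'a) \<Rightarrow> ('a \<Rightarrow> 'a) \<Rightarrow> complex set
                       \<Rightarrow> (complex \<Rightarrow> 'a \<times> 'a) \<Rightarrow> ('a \<Rightarrow> 'a) \<Rightarrow> bool" where
  "induces u M c D F f \<longleftrightarrow>
     (\<forall>a b J. Complex a b \<in> D \<and> J \<in> SA u M c \<longrightarrow>
        f (a *\<^sub>R u + b *\<^sub>R J) = fst (F (Complex a b)) + M J (snd (F (Complex a b))))"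

definition stem_mul :: "('a::real_vector \<Rightarrow> 'a \<Rightarrow> 'a) \<Rightarrow> (complex \<Rightarrow> 'a \<times> 'a) \<Rightarrow> (complex \<Rightarrow> 'a \<times> 'a)
                        \<Rightarrow> complex \<Rightarrow> 'a \<times> 'a" where
  "stem_mul M F G = (\<lambda>z. (M (fst (F z)) (fst (G z)) - M (snd (F z)) (snd (G z)),
                          M (fst (F z)) (snd (G z)) + M (snd (F z)) (fst (G z))))"

definition Vz :: "'a::real_vector \<Rightarrow> ('a \<Rightarrow> 'a \<Rightarrow> 'a) \<Rightarrow> ('a \<Rightarrow> 'a) \<Rightarrow> complex set \<Rightarrow> ('a \<Rightarrow> 'a) \<Rightarrow> 'a set" where
  "Vz u M c D f = {x \<in> Omega u M c D. f x = 0}"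

definition sph_val :: "('a::real_vector \<Rightarrow> 'a) \<Rightarrow> ('a \<Rightarrow> 'a) \<Rightarrow> 'a \<Rightarrow> 'a" where
  "sph_val c f x = (1/2) *\<^sub>R (f x + f (c x))"

definition sph_der :: "'a::real_vector \<Rightarrow> ('a \<Rightarrow> 'a \<Rightarrow> 'a) \<Rightarrow> ('a \<Rightarrow> 'a) \<Rightarrow> ('a \<Rightarrow> 'a) \<Rightarrow> 'a \<Rightarrow> 'a" where
  "sph_der u M c f x = (1/2) *\<^sub>R M (ainv u M (im c x)) (f x - f (c x))"

end

theory Submission
  imports Defs
begin

locale A =
  fixes u :: "'a::euclidean_space" and M :: "'a \<Rightarrow> 'a \<Rightarrow> 'a" (infixl "\<odot>" 70) and c :: "'a \<Rightarrow> 'a"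
  assumes alg: "alt_star_algebra u M c" and comp: "compatible M c"
begin

lemma bil: "bilinear M" using alg by (simp add: alt_star_algebra_def)
lemma linR: "linear (\<lambda>y. x \<odot> y)" using bil by (simp add: bilinear_def)
lemma linL: "linear (\<lambda>x. x \<odot> y)" using bil by (simp add: bilinear_def)

lemma M_addL[simp]: "(x + y) \<odot> z = x \<odot> z + y \<odot> z" using linear_add[OF linL] by simp
lemma M_addR[simp]: "z \<odot> (x + y) = z \<odot> x + z \<odot> y" using linear_add[OF linR] by simp
lemma M_diffL[simp]: "(x - y) \<odot> z = x \<odot> z - y \<odot> z" using linear_diff[OF linL] by simp
lemma M_diffR[simp]: "z \<odot> (x - y) = z \<odot> x - z \<odot> y" using linear_diff[OF linR] by simp
lemma M_minusL[simp]: "(- x) \<odot> z = - (x \<odot> z)" using linear_neg[OF linL] by simp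
lemma M_minusR[simp]: "z \<odot> (- x) = - (z \<odot> x)" using linear_neg[OF linR] by simp
lemma M_scaleL[simp]: "(r *\<^sub>R x) \<odot> z = r *\<^sub>R (x \<odot> z)" using linear_scale[OF linL] by simp
lemma M_scaleR[simp]: "z \<odot> (r *\<^sub>R x) = r *\<^sub>R (z \<odot> x)" using linear_scale[OF linR] by simp
lemma M_0L[simp]: "0 \<odot> z = 0" using linear_0[OF linL] by simp
lemma M_0R[simp]: "z \<odot> 0 = 0" using linear_0[OF linR] by simp

lemma uL[simp]: "u \<odot> x = x" and uR[simp]: "x \<odot> u = x" using alg by (auto simp: alt_star_algebra_def)

lemma c_lin: "linear c" using alg by (simp add: alt_star_algebra_def)
lemma c_add[simp]: "c (x + y) = c x + c y" using linear_add[OF c_lin] .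
lemma c_diff[simp]: "c (x - y) = c x - c y" using linear_diff[OF c_lin] .
lemma c_minus[simp]: "c (- x) = - c x" using linear_neg[OF c_lin] .
lemma c_scale[simp]: "c (r *\<^sub>R x) = r *\<^sub>R c x" using linear_scale[OF c_lin] .
lemma c_0[simp]: "c 0 = 0" using linear_0[OF c_lin] .
lemma cc[simp]: "c (c x) = x" using alg by (simp add: alt_star_algebra_def)
lemma cM[simp]: "c (x \<odot> y) = c y \<odot> c x" using alg by (simp add: alt_star_algebra_def)
lemma cu[simp]: "c u = u" using alg unfolding alt_star_algebra_def by (metis scaleR_one)

abbreviation as where "as x y z \<equiv> assoc M x y z"
lemma as_def': "as x y z = (x \<odot> y) \<odot> z - x \<odot> (y \<odot> z)" by (simp add: assoc_def)

lemma as_xxy: "as x x y = 0" and as_xyx: "as x y x = 0" and as_yxx: "as y x x = 0"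
  using alg by (auto simp: alt_star_algebra_def)

lemma as_add1[simp]: "as (x + y) z w = as x z w + as y z w" by (simp add: as_def' algebra_simps)
lemma as_add2[simp]: "as z (x + y) w = as z x w + as z y w" by (simp add: as_def' algebra_simps)
lemma as_add3[simp]: "as z w (x + y) = as z w x + as z w y" by (simp add: as_def' algebra_simps)
lemma as_diff1[simp]: "as (x - y) z w = as x z w - as y z w" by (simp add: as_def' algebra_simps)
lemma as_diff2[simp]: "as z (x - y) w = as z x w - as z y w" by (simp add: as_def' algebra_simps)
lemma as_diff3[simp]: "as z w (x - y) = as z w x - as z w y" by (simp add: as_def' algebra_simps)
lemma as_minus1[simp]: "as (- x) z w = - as x z w" by (simp add: as_def' algebra_simps)
lemma as_minus2[simp]: "as z (- x) w = - as z x w" by (simp add: as_def' algebra_simps)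
lemma as_minus3[simp]: "as z w (- x) = - as z w x" by (simp add: as_def' algebra_simps)
lemma as_scale1[simp]: "as (r *\<^sub>R x) z w = r *\<^sub>R as x z w" by (simp add: as_def' algebra_simps)
lemma as_scale2[simp]: "as z (r *\<^sub>R x) w = r *\<^sub>R as z x w" by (simp add: as_def' algebra_simps)
lemma as_scale3[simp]: "as z w (r *\<^sub>R x) = r *\<^sub>R as z w x" by (simp add: as_def' algebra_simps)
lemma as_01[simp]: "as 0 z w = 0" and as_02[simp]: "as z 0 w = 0" and as_03[simp]: "as z w 0 = 0"
  by (simp_all add: as_def')

lemma sw12: "as y x z = - as x y z"
proof -
  have "as (x+y) (x+y) z = as x x z + as x y z + as y x z + as y y z" by (simp add: algebra_simps)
  then have "as x y z + as y x z = 0" by (simp only: as_xxy) simp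
  thus ?thesis by (simp add: eq_neg_iff_add_eq_0 add.commute)
qed
lemma sw23: "as x z y = - as x y z"
proof -
  have "as x (y+z) (y+z) = as x y y + as x y z + as x z y + as x z z" by (simp add: algebra_simps)
  then have "as x y z + as x z y = 0" by (simp only: as_yxx) simp
  thus ?thesis by (simp add: eq_neg_iff_add_eq_0 add.commute)
qed
lemma sw13: "as z y x = - as x y z"
  by (metis sw12 sw23 minus_minus)
lemma cyc: "as y z x = as x y z"
  by (metis sw12 sw23 minus_minus)

lemma teich: "as (w \<odot> x) y z - as w (x \<odot> y) z + as w x (y \<odot> z) = w \<odot> as x y z + as w x y \<odot> z"
  by (simp add: as_def' algebra_simps)

lemma K1: "as x (x \<odot> y) z = as x y z \<odot> x"
proof -
  let ?A = "as x y z"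
  have e1: "as x (x \<odot> y) z + as x y (z \<odot> x) = x \<odot> ?A + ?A \<odot> x"
  proof -
    have "as (x \<odot> y) z x - as x (y \<odot> z) x + as x y (z \<odot> x) = x \<odot> as y z x + as x y z \<odot> x" by (rule teich)
    moreover have "as (x \<odot> y) z x = as x (x \<odot> y) z" by (metis cyc)
    moreover have "as y z x = ?A" by (rule cyc)
    ultimately show ?thesis by (simp add: as_xyx)
  qed
  have e2: "as (x \<odot> x) y z - as x (x \<odot> y) z = x \<odot> ?A"
    using teich[of x x y z] by (simp add: as_xxy)
  have e3: "- as x y (z \<odot> x) + as (x \<odot> x) y z = ?A \<odot> x"
  proof -
    have "as (y \<odot> z) x x - as y (z \<odot> x) x + as y z (x \<odot> x) = y \<odot> as z x x + as y z x \<odot> x" by (rule teich)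
    moreover have "as y (z \<odot> x) x = as x y (z \<odot> x)" by (metis cyc)
    moreover have "as y z (x \<odot> x) = as (x \<odot> x) y z" by (metis cyc)
    moreover have "as y z x = ?A" by (rule cyc)
    ultimately show ?thesis by (simp add: as_yxx)
  qed
  let ?P = "as x (x \<odot> y) z" and ?Q = "as x y (z \<odot> x)"
  have e3': "?P + x \<odot> ?A = ?Q + ?A \<odot> x" using e2 e3 by (simp add: algebra_simps)
  have "?P + ?P = (?P + ?Q) + (?P + x \<odot> ?A) - (?Q + x \<odot> ?A)" by (simp add: algebra_simps)
  also have "\<dots> = (x \<odot> ?A + ?A \<odot> x) + (?Q + ?A \<odot> x) - (?Q + x \<odot> ?A)" using e1 e3' by simp
  also have "\<dots> = ?A \<odot> x + ?A \<odot> x" by (simp add: algebra_simps)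
  finally have "2 *\<^sub>R ?P = 2 *\<^sub>R (?A \<odot> x)" by (simp add: scaleR_2)
  thus ?thesis by simp
qed


lemma c_as: "c (as x y z) = - as (c z) (c y) (c x)" by (simp add: as_def')

lemma K1m: "as z (y \<odot> x) x = x \<odot> as z y x"
proof -
  have "c (as (c x) (c x \<odot> c y) (c z)) = c (as (c x) (c y) (c z) \<odot> c x)" using K1 by simp
  thus ?thesis by (simp add: c_as)
qed

lemma flex: "(x \<odot> y) \<odot> x = x \<odot> (y \<odot> x)" using as_xyx[of x y] by (simp add: as_def')
lemma altL: "(x \<odot> x) \<odot> y = x \<odot> (x \<odot> y)" using as_xxy[of x y] by (simp add: as_def')
lemma altR: "(y \<odot> x) \<odot> x = y \<odot> (x \<odot> x)" using as_yxx[of y x] by (simp add: as_def')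

lemma RM: "((z \<odot> x) \<odot> y) \<odot> x = z \<odot> (x \<odot> (y \<odot> x))"
proof -
  have t: "as (z \<odot> x) y x - as z (x \<odot> y) x + as z x (y \<odot> x) = z \<odot> as x y x + as z x y \<odot> x" by (rule teich)
  have a: "as z (x \<odot> y) x = - (as x y z \<odot> x)" using sw13[of x "x \<odot> y" z] K1[of x y z] by simp
  have b: "as z x y = as x y z" using cyc[of x y z] by simp
  have "as (z \<odot> x) y x + as z x (y \<odot> x) = 0" using t a b by (simp add: as_xyx)
  thus ?thesis by (simp add: as_def' algebra_simps)
qed

lemma MM: "(x \<odot> y) \<odot> (z \<odot> x) = (x \<odot> (y \<odot> z)) \<odot> x"
proof -
  have a: "as (x \<odot> y) z x = as x y z \<odot> x" using cyc[of "x \<odot> y" z x] K1[of x y z] by simp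
  have "(x \<odot> y) \<odot> (z \<odot> x) = ((x \<odot> y) \<odot> z) \<odot> x - as (x \<odot> y) z x" by (simp add: as_def')
  also have "\<dots> = (x \<odot> (y \<odot> z)) \<odot> x" using a by (simp add: as_def')
  finally show ?thesis .
qed

lemma sq_as: "as (x \<odot> x) y z = x \<odot> as x y z + as x y z \<odot> x"
  using teich[of x x y z] K1[of x y z] by (simp add: as_xxy algebra_simps)

definition nuc where "nuc r \<longleftrightarrow> r \<in> nucleus M"
definition cen where "cen r \<longleftrightarrow> r \<in> center M"

lemma nuc1: "nuc r \<Longrightarrow> as r x y = 0" by (simp add: nuc_def nucleus_def)
lemma nuc2: "nuc r \<Longrightarrow> as x r y = 0" using nuc1 sw12 by (metis neg_equal_0_iff_equal)
lemma nuc3: "nuc r \<Longrightarrow> as x y r = 0" using nuc1 sw13 by (metis neg_equal_0_iff_equal)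
lemma nucA: "nuc r \<Longrightarrow> (r \<odot> x) \<odot> y = r \<odot> (x \<odot> y)" using nuc1[of r x y] by (simp add: as_def')
lemma nucB: "nuc r \<Longrightarrow> (x \<odot> r) \<odot> y = x \<odot> (r \<odot> y)" using nuc2[of r x y] by (simp add: as_def')
lemma nucC: "nuc r \<Longrightarrow> (x \<odot> y) \<odot> r = x \<odot> (y \<odot> r)" using nuc3[of r x y] by (simp add: as_def')
lemma cen_nuc: "cen r \<Longrightarrow> nuc r" by (simp add: cen_def center_def nuc_def)
lemma cen_comm: "cen r \<Longrightarrow> x \<odot> r = r \<odot> x" by (simp add: cen_def center_def)
lemma cenA: "cen r \<Longrightarrow> (r \<odot> x) \<odot> y = r \<odot> (x \<odot> y)" by (simp add: nucA cen_nuc)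
lemma cenB: "cen r \<Longrightarrow> x \<odot> (r \<odot> y) = r \<odot> (x \<odot> y)"
  by (metis cenA cen_comm cen_nuc nucB)
lemma cenC: "cen r \<Longrightarrow> (x \<odot> r) = r \<odot> x" by (simp add: cen_comm)

lemma tr_nuc: "nuc (tr c x)" using comp by (simp add: compatible_def nuc_def)
lemma c_eq: "c x = tr c x - x" by (simp add: tr_def)

lemma as_c1: "as (c x) y z = - as x y z" using nuc1[OF tr_nuc, of x y z] by (simp add: c_eq[of x])
lemma as_c2: "as y (c x) z = - as y x z" using nuc2[OF tr_nuc[of x], of y z] by (simp add: c_eq[of x])
lemma as_c3: "as y z (c x) = - as y z x" using nuc3[OF tr_nuc[of x], of y z] by (simp add: c_eq[of x])

lemma cen_u: "cen u" by (simp add: cen_def center_def nucleus_def as_def')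

lemma cen_mult: assumes r: "cen r" and s: "cen s" shows "cen (r \<odot> s)"
proof -
  have "as (r \<odot> s) x y = 0" for x y
    using r s by (simp add: as_def' cenA)
  moreover have "(r \<odot> s) \<odot> a = a \<odot> (r \<odot> s)" for a
    using cenA[OF r, of s a] cenB[OF r, of a s] cen_comm[OF s, of a] by simp
  ultimately show ?thesis by (simp add: cen_def center_def nucleus_def)
qed

lemma cen_inv: assumes "cen N" "N \<odot> b = u" shows "cen b"
proof -
  have bN: "b \<odot> N = u" using assms cen_comm by metis
  have nb: "nuc b"
    unfolding nuc_def nucleus_def
  proof (intro CollectI allI)
    fix x y
    have "N \<odot> as b x y = ((N \<odot> b) \<odot> x) \<odot> y - (N \<odot> b) \<odot> (x \<odot> y)"
      using assms(1) by (simp add: as_def' cenA)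
    also have "\<dots> = 0" using assms by simp
    finally have "N \<odot> as b x y = 0" .
    hence "b \<odot> (N \<odot> as b x y) = 0" by simp
    moreover have "b \<odot> (N \<odot> as b x y) = as b x y" using assms(1) bN by (simp add: nucB[symmetric] cen_nuc)
    ultimately show "as b x y = 0" by simp
  qed
  have "\<forall>a. b \<odot> a = a \<odot> b"
  proof
    fix a
    have "N \<odot> (b \<odot> a) = a" using assms by (simp add: cenA[symmetric])
    moreover have "N \<odot> (a \<odot> b) = a" using cenB[OF assms(1), of a b] assms(2) by simp
    ultimately have "b \<odot> (N \<odot> (b \<odot> a)) = b \<odot> (N \<odot> (a \<odot> b))" by simp
    thus "b \<odot> a = a \<odot> b" using bN nb nucB[of b] by (metis nucA uL)
  qed
  with nb show ?thesis by (simp add: cen_def center_def nuc_def)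
qed


definition good where "good a N Ni \<longleftrightarrow> cen N \<and> cen Ni \<and> N \<odot> Ni = u \<and> a \<odot> c a = N \<and> c a \<odot> a = N"

lemma cenNi: "cen N \<Longrightarrow> N \<odot> Ni = u \<Longrightarrow> Ni \<odot> N = u" by (metis cen_comm)

lemma CA_good: assumes "a \<in> CA u M c" "a \<noteq> 0" shows "\<exists>N Ni. good a N Ni"
proof -
  let ?N = "a \<odot> c a" and ?N2 = "c a \<odot> a"
  from assms have h: "cen ?N" "invertible_el u M ?N" "cen ?N2" "invertible_el u M ?N2"
    by (auto simp: CA_def nm_def cen_def)
  from h(2) obtain Ni where Ni: "?N \<odot> Ni = u" unfolding invertible_el_def by blast
  from h(4) obtain N2i where N2i: "?N2 \<odot> N2i = u" unfolding invertible_el_def by blast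
  have cNi: "cen Ni" using cen_inv h(1) Ni by blast
  have cN2i: "cen N2i" using cen_inv h(3) N2i by blast
  have e1: "a \<odot> ?N2 = ?N \<odot> a"
    using as_c2[of a a a] as_xxy[of a a] by (simp add: as_def' as_xyx)
  have e2: "a \<odot> (?N - ?N2) = 0" using e1 cen_comm[OF h(1), of a] cen_comm[OF h(3), of a] by simp
  have "c a \<odot> (a \<odot> (?N - ?N2)) = ?N2 \<odot> (?N - ?N2)"
    using as_c1[of a a "?N - ?N2"] as_xxy[of a "?N - ?N2"] by (simp add: as_def' del: M_diffR)
  hence e3: "?N2 \<odot> (?N - ?N2) = 0" using e2 by simp
  have "N2i \<odot> (?N2 \<odot> (?N - ?N2)) = ?N - ?N2"
    using cenA[OF cN2i, of ?N2 "?N - ?N2"] cenNi[OF h(3) N2i] by (simp del: M_diffR)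
  hence "?N = ?N2" using e3 by simp
  thus ?thesis using h(1) cNi Ni unfolding good_def by auto
qed

lemma good_c: "good a N Ni \<Longrightarrow> good (c a) N Ni" by (simp add: good_def)

lemma cN: "good a N Ni \<Longrightarrow> c N = N" unfolding good_def by (metis cM cc)
lemma cNi: assumes "good a N Ni" shows "c Ni = Ni"
proof -
  have g: "cen N" "cen Ni" "N \<odot> Ni = u" using assms by (auto simp: good_def)
  have "c Ni \<odot> N = u" using cM[of N Ni] g(3) cN[OF assms] by simp
  hence "(c Ni \<odot> N) \<odot> Ni = Ni" by simp
  thus ?thesis using cenB[OF g(1), of "c Ni" Ni] g by (simp add: cen_nuc nucB)
qed

context
  fixes a N Ni assumes g: "good a N Ni"
begin
lemma g1: "cen N" and g2: "cen Ni" and g3: "N \<odot> Ni = u" and g4: "a \<odot> c a = N" and g5: "c a \<odot> a = N"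
  and g6: "Ni \<odot> N = u"
  using g cenNi by (auto simp: good_def)

lemma inv1: "(x \<odot> a) \<odot> (Ni \<odot> c a) = x"
proof -
  have "(x \<odot> a) \<odot> (Ni \<odot> c a) = Ni \<odot> ((x \<odot> a) \<odot> c a)" by (rule cenB[OF g2])
  also have "(x \<odot> a) \<odot> c a = x \<odot> N" using as_c3[of x a a] as_yxx[of x a] g4 by (simp add: as_def')
  also have "x \<odot> N = N \<odot> x" by (rule cen_comm[OF g1])
  finally show ?thesis using cenA[OF g2, of N x] g6 by simp
qed
lemma inv2: "a \<odot> (Ni \<odot> c a) = u" using cenB[OF g2, of a "c a"] g4 g6 by simp
lemma inv3: "(Ni \<odot> c a) \<odot> a = u" using cenA[OF g2, of "c a" a] g5 g6 by simp
lemma inv4: "(Ni \<odot> c a) \<odot> (a \<odot> x) = x"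
proof -
  have "(Ni \<odot> c a) \<odot> (a \<odot> x) = Ni \<odot> (c a \<odot> (a \<odot> x))" by (rule cenA[OF g2])
  also have "c a \<odot> (a \<odot> x) = N \<odot> x" using as_c1[of a a x] as_xxy[of a x] g5 by (simp add: as_def')
  finally show ?thesis using cenA[OF g2, of N x] g6 by simp
qed
lemma inv5: "a \<odot> ((Ni \<odot> c a) \<odot> x) = x"
proof -
  have "a \<odot> ((Ni \<odot> c a) \<odot> x) = Ni \<odot> (a \<odot> (c a \<odot> x))" by (simp add: cenA[OF g2] cenB[OF g2])
  also have "a \<odot> (c a \<odot> x) = N \<odot> x" using as_c2[of a a x] as_xxy[of a x] g4 by (simp add: as_def')
  finally show ?thesis using cenA[OF g2, of N x] g6 by simp
qed
lemma inv6: "(x \<odot> (Ni \<odot> c a)) \<odot> a = x"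
proof -
  have "(x \<odot> (Ni \<odot> c a)) \<odot> a = Ni \<odot> ((x \<odot> c a) \<odot> a)" by (simp add: cenA[OF g2] cenB[OF g2])
  also have "(x \<odot> c a) \<odot> a = x \<odot> N" using as_c2[of x a a] as_yxx[of x a] g5 by (simp add: as_def')
  also have "x \<odot> N = N \<odot> x" by (rule cen_comm[OF g1])
  finally show ?thesis using cenA[OF g2, of N x] g6 by simp
qed
lemma ainv_eq: "ainv u M a = Ni \<odot> c a"
proof -
  have ex: "\<exists>b. a \<odot> b = u \<and> b \<odot> a = u" using inv2 inv3 by blast
  let ?b = "ainv u M a"
  have "a \<odot> ?b = u \<and> ?b \<odot> a = u" unfolding ainv_def using someI_ex[OF ex] .
  hence "(?b \<odot> a) \<odot> (Ni \<odot> c a) = Ni \<odot> c a" by simp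
  thus ?thesis using inv1[of ?b] by simp
qed

lemma rcancel: "x \<odot> a = y \<odot> a \<Longrightarrow> x = y" by (metis inv1)
lemma lcancel: "a \<odot> x = a \<odot> y \<Longrightarrow> x = y" by (metis inv4)

lemma tr_comm: "tr c a \<odot> a = a \<odot> tr c a" using g4 g5 by (simp add: tr_def)

lemma ID2: "(z \<odot> (y \<odot> a)) \<odot> c a = (z \<odot> a) \<odot> (c a \<odot> y)"
proof -
  have p1: "(y \<odot> a) \<odot> c a = N \<odot> y"
    using as_c3[of y a a] as_yxx[of y a] g4 cen_comm[OF g1] by (simp add: as_def')
  have p2: "(z \<odot> a) \<odot> c a = N \<odot> z"
    using as_c3[of z a a] as_yxx[of z a] g4 cen_comm[OF g1] by (simp add: as_def')
  have L: "(z \<odot> (y \<odot> a)) \<odot> c a = N \<odot> (z \<odot> y) + as z (y \<odot> a) (c a)"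
    using p1 cenB[OF g1, of z y] by (simp add: as_def')
  have R: "(z \<odot> a) \<odot> (c a \<odot> y) = N \<odot> (z \<odot> y) - as (z \<odot> a) (c a) y"
    using p2 cenA[OF g1, of z y] by (simp add: as_def')
  have k1: "as z (y \<odot> a) a = a \<odot> as z y a" by (rule K1m)
  have k2: "as (z \<odot> a) a y = a \<odot> as y z a" using cyc[of "z \<odot> a" a y] K1m[of y z a] by simp
  have k3: "as z y a + as y z a = 0" using sw12[of z y a] by simp
  have "as z (y \<odot> a) (c a) + as (z \<odot> a) (c a) y = - (a \<odot> (as z y a + as y z a))"
    using k1 k2 by (simp add: as_c2 as_c3)
  hence s0: "as (z \<odot> a) (c a) y + as z (y \<odot> a) (c a) = 0" using sw12[of y z a] by (simp add: add.commute)
  have R': "N \<odot> (z \<odot> y) = (z \<odot> a) \<odot> (c a \<odot> y) + as (z \<odot> a) (c a) y" using R by (simp add: algebra_simps)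
  have "(z \<odot> (y \<odot> a)) \<odot> c a = (z \<odot> a) \<odot> (c a \<odot> y) + (as (z \<odot> a) (c a) y + as z (y \<odot> a) (c a))"
    using L R' by (simp add: algebra_simps)
  thus ?thesis using s0 by simp
qed

lemma Id: "c a \<odot> ((y \<odot> a) \<odot> z) = (c a \<odot> y) \<odot> (a \<odot> z)"
proof -
  let ?t = "tr c a" and ?A = "as a y z"
  have tn: "nuc ?t" by (rule tr_nuc)
  have ta: "as (?t \<odot> w) p q = ?t \<odot> as w p q" for w p q
    using tn by (simp add: as_def' nucA)
  have s1: "c a \<odot> (y \<odot> a) = (c a \<odot> y) \<odot> a" using as_c1[of a y a] as_xyx[of a y] by (simp add: as_def')
  have D: "c a \<odot> ((y \<odot> a) \<odot> z) - (c a \<odot> y) \<odot> (a \<odot> z) = as (c a \<odot> y) a z - as (c a) (y \<odot> a) z"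
    using s1 by (simp add: as_def')
  have d1: "as (c a \<odot> y) a z = ?t \<odot> as y a z - as (a \<odot> y) a z"
    using ta[of y a z] by (simp add: c_eq[of a])
  have d2: "as (a \<odot> y) a z = - (?A \<odot> a)"
    using cyc[of "a \<odot> y" a z] sw13[of z "a \<odot> y" a] K1[of a y z] by simp
  have d3: "as (c a) (y \<odot> a) z = - (a \<odot> ?A)"
    using as_c1[of a "y \<odot> a" z] sw13[of a "y \<odot> a" z] K1m[of z y a] sw13[of z y a] by simp
  have d4: "as y a z = - ?A" using sw12[of y a z] by simp
  have sq: "a \<odot> a = ?t \<odot> a - N" using tr_comm g4 by (simp add: tr_def)
  have d5: "as (a \<odot> a) y z = ?t \<odot> ?A"
    using sq ta[of a y z] g1 cen_nuc nuc1 by simp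
  have "c a \<odot> ((y \<odot> a) \<odot> z) - (c a \<odot> y) \<odot> (a \<odot> z) = - (?t \<odot> ?A) + ?A \<odot> a + a \<odot> ?A"
    using D d1 d2 d3 d4 by simp
  also have "\<dots> = (a \<odot> ?A + ?A \<odot> a) - ?t \<odot> ?A" by (simp add: algebra_simps)
  also have "\<dots> = 0" using d5 sq_as[of a y z] by simp
  finally show ?thesis by simp
qed

end



lemma SA_c: assumes "J \<in> SA u M c" shows "c J = - J"
proof -
  have "J + c J = 0" using assms by (simp add: SA_def tr_def)
  thus ?thesis by (metis add.commute eq_neg_iff_add_eq_0)
qed
lemma SA_n: "J \<in> SA u M c \<Longrightarrow> J \<odot> c J = u" by (simp add: SA_def nm_def)

lemma SA_sq: assumes "J \<in> SA u M c" shows "J \<odot> J = - u"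
proof -
  have "J \<odot> (- J) = u" using SA_c[OF assms] SA_n[OF assms] by simp
  hence "- (J \<odot> J) = u" by simp
  thus ?thesis by (metis minus_minus)
qed
lemma SA_JJ: assumes "J \<in> SA u M c" shows "J \<odot> (J \<odot> x) = - x"
proof -
  have "J \<odot> (J \<odot> x) = (J \<odot> J) \<odot> x" by (rule altL[symmetric])
  also have "\<dots> = - x" using SA_sq[OF assms] by simp
  finally show ?thesis .
qed
lemma SA_neg: assumes "J \<in> SA u M c" shows "- J \<in> SA u M c"
proof -
  have "tr c (- J) = 0" using SA_c[OF assms] by (simp add: tr_def)
  moreover have "nm M c (- J) = u" using SA_c[OF assms] SA_n[OF assms] by (simp add: nm_def)
  ultimately show ?thesis by (simp add: SA_def)
qed

lemma cen_swap: assumes "cen r" "cen s" shows "r \<odot> (s \<odot> x) = s \<odot> (r \<odot> x)"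
proof -
  have "r \<odot> (s \<odot> x) = (r \<odot> s) \<odot> x" by (rule cenA[OF assms(1), symmetric])
  also have "\<dots> = (s \<odot> r) \<odot> x" using cen_comm[OF assms(1), of s] by simp
  also have "\<dots> = s \<odot> (r \<odot> x)" by (rule cenA[OF assms(2)])
  finally show ?thesis .
qed

lemma cen_cancel: "cen r \<Longrightarrow> r \<odot> s = u \<Longrightarrow> r \<odot> (s \<odot> x) = x" by (metis cenA uL)

lemma NM: assumes z: "z \<odot> c z = Nz" "cen Nz" shows "(x \<odot> z) \<odot> c (x \<odot> z) = Nz \<odot> (x \<odot> c x)"
proof -
  have a1: "as (x \<odot> z) (c z) (c x) = 0"
    using as_c2[of "x \<odot> z" z "c x"] as_c3[of "x \<odot> z" z x] cyc[of "x \<odot> z" z x] K1[of x z z] as_yxx[of x z] by simp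
  have a2: "(x \<odot> z) \<odot> c z = Nz \<odot> x"
    using as_c3[of x z z] as_yxx[of x z] z cen_comm[OF z(2), of x] by (simp add: as_def')
  have "(x \<odot> z) \<odot> c (x \<odot> z) = ((x \<odot> z) \<odot> c z) \<odot> c x" using a1 by (simp add: as_def')
  also have "\<dots> = Nz \<odot> (x \<odot> c x)" using a2 cenA[OF z(2)] by simp
  finally show ?thesis .
qed

lemma M4a: assumes g: "good d Nd Ndi" and I1: "I1 \<in> SA u M c" and I2: "I2 \<in> SA u M c"
  and h: "(I1 \<odot> a) \<odot> d = - (a \<odot> (I2 \<odot> d))"
  shows "(I1 \<odot> a) \<odot> (I2 \<odot> d) = a \<odot> d"
proof -
  let ?Z = "I2 \<odot> d" and ?d' = "Ndi \<odot> c d"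
  have Zd: "?Z \<odot> ?d' = I2" using inv1[OF g] .
  have e1: "I1 \<odot> a = - ((a \<odot> ?Z) \<odot> ?d')" using inv1[OF g, of "I1 \<odot> a"] h by simp
  have "(I1 \<odot> a) \<odot> ?Z = - (((a \<odot> ?Z) \<odot> ?d') \<odot> ?Z)" using e1 by simp
  also have "((a \<odot> ?Z) \<odot> ?d') \<odot> ?Z = a \<odot> (?Z \<odot> (?d' \<odot> ?Z))" by (rule RM)
  also have "?Z \<odot> (?d' \<odot> ?Z) = (?Z \<odot> ?d') \<odot> ?Z" by (rule flex[symmetric])
  also have "\<dots> = - d" using Zd SA_JJ[OF I2] by simp
  finally show ?thesis by simp
qed

lemma SA2: assumes ga: "good a Na Nai" and gd: "good d Nd Ndi" and I: "I \<in> SA u M c"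
  shows "((Nai \<odot> c a) \<odot> ((I \<odot> a) \<odot> d)) \<odot> (Ndi \<odot> c d) \<in> SA u M c"
proof -
  let ?w = "(I \<odot> a) \<odot> d" and ?q = "c a \<odot> I"
  let ?Y = "(Nai \<odot> c a) \<odot> ?w"
  let ?K = "?Y \<odot> (Ndi \<odot> c d)"
  note a = g1[OF ga] g2[OF ga] g3[OF ga] g4[OF ga] g5[OF ga] g6[OF ga]
  note d = g1[OF gd] g2[OF gd] g3[OF gd] g4[OF gd] g5[OF gd] g6[OF gd]
  have Y1: "?Y = Nai \<odot> (c a \<odot> ?w)" using cenA[OF a(2)] .
  have Y2: "?Y = Nai \<odot> (?q \<odot> (a \<odot> d))" using Y1 Id[OF ga, of I d] by simp
  have Kd: "?K \<odot> d = ?Y" using inv6[OF gd] .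
  have cd': "c (Ndi \<odot> c d) = Ndi \<odot> d" using cNi[OF gd] cen_comm[OF d(2), of d] by simp
  have cw: "c ?w = - (c d \<odot> ?q)" using SA_c[OF I] by simp
  have "c ?Y = (c ?w \<odot> a) \<odot> Nai" using Y1 cNi[OF ga] by simp
  also have "\<dots> = Nai \<odot> (c ?w \<odot> a)" by (rule cen_comm[OF a(2)])
  finally have cY: "c ?Y = - (Nai \<odot> ((c d \<odot> ?q) \<odot> a))" using cw by simp
  let ?P = "(c d \<odot> ?q) \<odot> a"
  have "- c ?K = (Ndi \<odot> d) \<odot> (Nai \<odot> ?P)" using cd' cY by simp
  also have "\<dots> = Ndi \<odot> (Nai \<odot> (d \<odot> ?P))" using cenA[OF d(2), of d] cenB[OF a(2), of d ?P] by simp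
  finally have "(- c ?K) \<odot> d = (Ndi \<odot> (Nai \<odot> (d \<odot> ?P))) \<odot> d" by simp
  also have "\<dots> = Ndi \<odot> (Nai \<odot> ((d \<odot> ?P) \<odot> d))" using cenA[OF d(2)] cenA[OF a(2)] by simp
  also have "(d \<odot> ((c d \<odot> ?q) \<odot> a)) \<odot> d = (d \<odot> (c d \<odot> ?q)) \<odot> (a \<odot> d)" by (rule MM[symmetric])
  also have "d \<odot> (c d \<odot> ?q) = Nd \<odot> ?q"
    using as_c2[of d d ?q] as_xxy[of d ?q] d(4) by (simp add: as_def')
  also have "(Nd \<odot> ?q) \<odot> (a \<odot> d) = Nd \<odot> (?q \<odot> (a \<odot> d))" by (rule cenA[OF d(1)])
  also have "Nai \<odot> (Nd \<odot> (?q \<odot> (a \<odot> d))) = Nd \<odot> (Nai \<odot> (?q \<odot> (a \<odot> d)))"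
    by (rule cen_swap[OF a(2) d(1)])
  also have "Ndi \<odot> (Nd \<odot> (Nai \<odot> (?q \<odot> (a \<odot> d)))) = Nai \<odot> (?q \<odot> (a \<odot> d))"
    by (rule cen_cancel[OF d(2) d(6)])
  finally have "(- c ?K) \<odot> d = ?K \<odot> d" using Y2 Kd by simp
  hence cK: "c ?K = - ?K" using rcancel[OF gd] by (metis minus_minus)
  have nd': "(Ndi \<odot> c d) \<odot> c (Ndi \<odot> c d) = Ndi"
    using cd' cenA[OF d(2), of "c d" "Ndi \<odot> d"] cenB[OF d(2), of "c d" d] d(5) d(6) by simp
  have nIa: "(I \<odot> a) \<odot> c (I \<odot> a) = Na" using NM[OF a(4) a(1), of I] SA_n[OF I] by simp
  have nw: "?w \<odot> c ?w = Nd \<odot> Na" using NM[OF d(4) d(1), of "I \<odot> a"] nIa by simp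
  have na': "(Nai \<odot> c a) \<odot> c (Nai \<odot> c a) = Nai"
    using cNi[OF ga] cenA[OF a(2), of "c a" "Nai \<odot> a"] cenB[OF a(2), of "c a" a] a(5) a(6) cen_comm[OF a(2), of a] by simp
  have nY: "?Y \<odot> c ?Y = Nd"
    using NM[OF nw cen_mult[OF d(1) a(1)], of "Nai \<odot> c a"] na' cenA[OF d(1), of Na Nai] a(3) by simp
  have nK: "?K \<odot> c ?K = u"
    using NM[OF nd' d(2), of ?Y] nY d(6) by simp
  show ?thesis using cK nK by (simp add: SA_def tr_def nm_def)
qed


lemma SA3: assumes ga: "good a Na Nai" and gd: "good d Nd Ndi" and I: "I \<in> SA u M c"
  shows "((a \<odot> (I \<odot> d)) \<odot> (Ndi \<odot> c d)) \<odot> (Nai \<odot> c a) \<in> SA u M c"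
proof -
  let ?w = "I \<odot> d" and ?q = "c d \<odot> I"
  let ?Y = "(a \<odot> ?w) \<odot> (Ndi \<odot> c d)"
  let ?K = "?Y \<odot> (Nai \<odot> c a)"
  note a = g1[OF ga] g2[OF ga] g3[OF ga] g4[OF ga] g5[OF ga] g6[OF ga]
  note d = g1[OF gd] g2[OF gd] g3[OF gd] g4[OF gd] g5[OF gd] g6[OF gd]
  have Ka: "?K \<odot> a = ?Y" using inv6[OF ga] .
  have Y1: "?Y = Ndi \<odot> ((a \<odot> ?w) \<odot> c d)" using cenB[OF d(2)] .
  have Y2: "?Y = Ndi \<odot> ((a \<odot> d) \<odot> ?q)" using Y1 ID2[OF gd, of a I] by simp
  have ca': "c (Nai \<odot> c a) = Nai \<odot> a" using cNi[OF ga] cen_comm[OF a(2), of a] by simp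
  let ?p = "?q \<odot> c a"
  have cv: "c ((a \<odot> ?w) \<odot> c d) = - (d \<odot> ?p)" using SA_c[OF I] by simp
  have "c ?Y = c ((a \<odot> ?w) \<odot> c d) \<odot> Ndi" using Y1 cNi[OF gd] by simp
  also have "\<dots> = Ndi \<odot> c ((a \<odot> ?w) \<odot> c d)" by (rule cen_comm[OF d(2)])
  finally have cY: "c ?Y = - (Ndi \<odot> (d \<odot> ?p))" using cv by simp
  have "- c ?K = (Nai \<odot> a) \<odot> (Ndi \<odot> (d \<odot> ?p))" using ca' cY by simp
  also have "\<dots> = Nai \<odot> (Ndi \<odot> (a \<odot> (d \<odot> ?p)))" using cenA[OF a(2), of a] cenB[OF d(2), of a "d \<odot> ?p"] by simp
  finally have "(- c ?K) \<odot> a = (Nai \<odot> (Ndi \<odot> (a \<odot> (d \<odot> ?p)))) \<odot> a" by simp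
  also have "\<dots> = Nai \<odot> (Ndi \<odot> ((a \<odot> (d \<odot> ?p)) \<odot> a))" using cenA[OF d(2)] cenA[OF a(2)] by simp
  also have "(a \<odot> (d \<odot> ?p)) \<odot> a = (a \<odot> d) \<odot> (?p \<odot> a)" by (rule MM[symmetric])
  also have "?p \<odot> a = Na \<odot> ?q"
    using as_c2[of ?q a a] as_yxx[of ?q a] a(5) cen_comm[OF a(1), of ?q] by (simp add: as_def')
  also have "(a \<odot> d) \<odot> (Na \<odot> ?q) = Na \<odot> ((a \<odot> d) \<odot> ?q)" by (rule cenB[OF a(1)])
  also have "Ndi \<odot> (Na \<odot> ((a \<odot> d) \<odot> ?q)) = Na \<odot> (Ndi \<odot> ((a \<odot> d) \<odot> ?q))" by (rule cen_swap[OF d(2) a(1)])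
  also have "Nai \<odot> (Na \<odot> (Ndi \<odot> ((a \<odot> d) \<odot> ?q))) = Ndi \<odot> ((a \<odot> d) \<odot> ?q)" by (rule cen_cancel[OF a(2) a(6)])
  finally have "(- c ?K) \<odot> a = ?K \<odot> a" using Y2 Ka by simp
  hence cK: "c ?K = - ?K" using rcancel[OF ga] by (metis minus_minus)
  have nd': "(Ndi \<odot> c d) \<odot> c (Ndi \<odot> c d) = Ndi"
    using cNi[OF gd] cenA[OF d(2), of "c d" "Ndi \<odot> d"] cenB[OF d(2), of "c d" d] d(5) d(6) cen_comm[OF d(2), of d] by simp
  have na': "(Nai \<odot> c a) \<odot> c (Nai \<odot> c a) = Nai"
    using cNi[OF ga] cenA[OF a(2), of "c a" "Nai \<odot> a"] cenB[OF a(2), of "c a" a] a(5) a(6) cen_comm[OF a(2), of a] by simp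
  have nw: "?w \<odot> c ?w = Nd" using NM[OF d(4) d(1), of I] SA_n[OF I] by simp
  have naw: "(a \<odot> ?w) \<odot> c (a \<odot> ?w) = Nd \<odot> Na" using NM[OF nw d(1), of a] a(4) by simp
  have nY: "?Y \<odot> c ?Y = Na"
    using NM[OF nd' d(2), of "a \<odot> ?w"] naw cen_cancel[OF d(2) d(6)] by simp
  have nK: "?K \<odot> c ?K = u"
    using NM[OF na' a(2), of ?Y] nY a(6) by simp
  show ?thesis using cK nK by (simp add: SA_def tr_def nm_def)
qed




lemma all0: fixes x :: 'a shows "u = 0 \<Longrightarrow> x = 0" using uR[of x] by simp

lemma SA_nz: "u \<noteq> 0 \<Longrightarrow> J \<in> SA u M c \<Longrightarrow> J \<noteq> 0" using SA_n by fastforce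

lemma tr_rep: assumes J: "J \<in> SA u M c" shows "tr c (a *\<^sub>R u + b *\<^sub>R J) = a *\<^sub>R u + a *\<^sub>R u"
  using SA_c[OF J] by (simp add: tr_def)

lemma nm_bJ: "J \<in> SA u M c \<Longrightarrow> (b *\<^sub>R J) \<odot> c (b *\<^sub>R J) = (b * b) *\<^sub>R u"
  using SA_n[of J] by simp

lemma uniq: assumes u: "u \<noteq> 0" and J: "J \<in> SA u M c" and J': "J' \<in> SA u M c"
  and e: "a *\<^sub>R u + b *\<^sub>R J = a' *\<^sub>R u + b' *\<^sub>R J'"
  shows "a = a' \<and> b *\<^sub>R J = b' *\<^sub>R J' \<and> (b = b' \<or> b = - b')"
proof -
  have "a *\<^sub>R u + a *\<^sub>R u = a' *\<^sub>R u + a' *\<^sub>R u" using tr_rep[OF J, of a b] tr_rep[OF J', of a' b'] e by metis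
  hence "2 *\<^sub>R (a *\<^sub>R u) = 2 *\<^sub>R (a' *\<^sub>R u)" by (simp only: scaleR_2)
  hence "a *\<^sub>R u = a' *\<^sub>R u" by (metis scaleR_left_imp_eq zero_neq_numeral)
  hence aa: "a = a'" using u by (metis scaleR_right_imp_eq)
  hence bb: "b *\<^sub>R J = b' *\<^sub>R J'" using e by simp
  have "(b * b) *\<^sub>R u = (b' * b') *\<^sub>R u" using nm_bJ[OF J, of b] nm_bJ[OF J', of b'] bb by simp
  hence "b * b = b' * b'" using u by simp
  hence "b = b' \<or> b = - b'" by (metis minus_mult_minus square_eq_iff)
  with aa bb show ?thesis by simp
qed

lemma real_rep: assumes u: "u \<noteq> 0" and J: "J \<in> SA u M c" and x: "a *\<^sub>R u + b *\<^sub>R J \<in> realA u"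
  shows "b = 0"
proof -
  obtain r where "a *\<^sub>R u + b *\<^sub>R J = r *\<^sub>R u + 0 *\<^sub>R J" using x by (auto simp: realA_def)
  hence "b *\<^sub>R J = 0" using uniq[OF u J J] by simp
  thus ?thesis using SA_nz[OF u J] by simp
qed

lemma sphere_eq: assumes u: "u \<noteq> 0" and J: "J \<in> SA u M c"
  shows "sphere u M c (a *\<^sub>R u + b *\<^sub>R J) = {a *\<^sub>R u + b *\<^sub>R I | I. I \<in> SA u M c}"
proof
  show "sphere u M c (a *\<^sub>R u + b *\<^sub>R J) \<subseteq> {a *\<^sub>R u + b *\<^sub>R I | I. I \<in> SA u M c}"
  proof
    fix y assume "y \<in> sphere u M c (a *\<^sub>R u + b *\<^sub>R J)"
    then obtain a1 b1 I J1 where y: "y = a1 *\<^sub>R u + b1 *\<^sub>R I" and I: "I \<in> SA u M c" and J1: "J1 \<in> SA u M c"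
      and e: "a *\<^sub>R u + b *\<^sub>R J = a1 *\<^sub>R u + b1 *\<^sub>R J1"
      unfolding sphere_def by blast
    from uniq[OF u J J1 e] have "a = a1" "b = b1 \<or> b = - b1" by auto
    then show "y \<in> {a *\<^sub>R u + b *\<^sub>R I | I. I \<in> SA u M c}"
    proof (cases "b = b1")
      case True thus ?thesis using y I \<open>a = a1\<close> by blast
    next
      case False
      hence "b1 = - b" using \<open>b = b1 \<or> b = - b1\<close> by auto
      hence "y = a *\<^sub>R u + b *\<^sub>R (- I)" using y \<open>a = a1\<close> by simp
      thus ?thesis using SA_neg[OF I] by blast
    qed
  qed
next
  show "{a *\<^sub>R u + b *\<^sub>R I | I. I \<in> SA u M c} \<subseteq> sphere u M c (a *\<^sub>R u + b *\<^sub>R J)"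
    unfolding sphere_def using J by blast
qed

lemma stem_mul_stem: "stem D F \<Longrightarrow> stem D G \<Longrightarrow> stem D (stem_mul M F G)"
  by (simp add: stem_def stem_mul_def)

lemma cen_ru: "cen (r *\<^sub>R u)"
  by (simp add: cen_def center_def nucleus_def as_def')

lemma ainv_bJ: assumes J: "J \<in> SA u M c" and b: "b \<noteq> 0"
  shows "ainv u M (b *\<^sub>R J) = (- (1 / b)) *\<^sub>R J"
proof -
  have g: "good (b *\<^sub>R J) ((b * b) *\<^sub>R u) ((1 / (b * b)) *\<^sub>R u)"
    unfolding good_def using cen_ru SA_n[OF J] SA_c[OF J] SA_sq[OF J] b by simp
  show ?thesis using ainv_eq[OF g] SA_c[OF J] b by (simp add: field_simps)
qed

lemma slice_vals:
  assumes u: "u \<noteq> 0" and st: "stem D F" and fi: "induces u M c D F f"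
    and z: "Complex \<alpha> \<beta> \<in> D" and zc: "Complex \<alpha> (- \<beta>) \<in> D" and J: "J \<in> SA u M c"
  shows "\<And>I. I \<in> SA u M c \<Longrightarrow> f (\<alpha> *\<^sub>R u + \<beta> *\<^sub>R I) = fst (F (Complex \<alpha> \<beta>)) + I \<odot> snd (F (Complex \<alpha> \<beta>))"
    and "sph_val c f (\<alpha> *\<^sub>R u + \<beta> *\<^sub>R J) = fst (F (Complex \<alpha> \<beta>))"
    and "\<beta> \<noteq> 0 \<Longrightarrow> sph_der u M c f (\<alpha> *\<^sub>R u + \<beta> *\<^sub>R J) = (1 / \<beta>) *\<^sub>R snd (F (Complex \<alpha> \<beta>))"
    and "\<beta> = 0 \<Longrightarrow> snd (F (Complex \<alpha> \<beta>)) = 0"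
proof -
  show fI: "\<And>I. I \<in> SA u M c \<Longrightarrow> f (\<alpha> *\<^sub>R u + \<beta> *\<^sub>R I) = fst (F (Complex \<alpha> \<beta>)) + I \<odot> snd (F (Complex \<alpha> \<beta>))"
    using fi z unfolding induces_def by blast
  have cn: "cnj (Complex \<alpha> \<beta>) = Complex \<alpha> (- \<beta>)" by (simp add: complex_eq_iff)
  have Fc: "F (Complex \<alpha> (- \<beta>)) = (fst (F (Complex \<alpha> \<beta>)), - snd (F (Complex \<alpha> \<beta>)))"
    using st z cn unfolding stem_def by metis
  have "f (\<alpha> *\<^sub>R u + (- \<beta>) *\<^sub>R J) = fst (F (Complex \<alpha> (- \<beta>))) + J \<odot> snd (F (Complex \<alpha> (- \<beta>)))"
    using fi zc J unfolding induces_def by blast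
  hence fc: "f (\<alpha> *\<^sub>R u + (- \<beta>) *\<^sub>R J) = fst (F (Complex \<alpha> \<beta>)) - J \<odot> snd (F (Complex \<alpha> \<beta>))"
    using Fc by simp
  have cx: "c (\<alpha> *\<^sub>R u + \<beta> *\<^sub>R J) = \<alpha> *\<^sub>R u + (- \<beta>) *\<^sub>R J" using SA_c[OF J] by simp
  show "sph_val c f (\<alpha> *\<^sub>R u + \<beta> *\<^sub>R J) = fst (F (Complex \<alpha> \<beta>))"
    unfolding sph_val_def cx using fc fI[OF J] by (simp add: scaleR_2[symmetric] algebra_simps)
  show "\<beta> \<noteq> 0 \<Longrightarrow> sph_der u M c f (\<alpha> *\<^sub>R u + \<beta> *\<^sub>R J) = (1 / \<beta>) *\<^sub>R snd (F (Complex \<alpha> \<beta>))"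
  proof -
    assume b: "\<beta> \<noteq> 0"
    have im: "im c (\<alpha> *\<^sub>R u + \<beta> *\<^sub>R J) = \<beta> *\<^sub>R J"
      unfolding im_def re_def using tr_rep[OF J, of \<alpha> \<beta>] by (simp add: scaleR_2[symmetric])
    have "f (\<alpha> *\<^sub>R u + \<beta> *\<^sub>R J) - f (c (\<alpha> *\<^sub>R u + \<beta> *\<^sub>R J)) = 2 *\<^sub>R (J \<odot> snd (F (Complex \<alpha> \<beta>)))"
      using cx fc fI[OF J] by (simp add: scaleR_2)
    thus ?thesis unfolding sph_der_def im ainv_bJ[OF J b] using SA_JJ[OF J] b by simp
  qed
  show "\<beta> = 0 \<Longrightarrow> snd (F (Complex \<alpha> \<beta>)) = 0"
  proof -
    assume "\<beta> = 0"
    hence "snd (F (Complex \<alpha> \<beta>)) = - snd (F (Complex \<alpha> \<beta>))" using Fc by (metis minus_zero snd_conv)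
    hence "2 *\<^sub>R snd (F (Complex \<alpha> \<beta>)) = 0" by (simp add: scaleR_2 eq_neg_iff_add_eq_0)
    thus ?thesis by simp
  qed
qed


context
  fixes S Om Vf Vg Vh :: "'a set" and \<alpha> \<beta> :: real and J A1 B1 a d hd :: 'a and f g h :: "'a \<Rightarrow> 'a"
  assumes u: "u \<noteq> 0" and J: "J \<in> SA u M c" and b: "\<beta> \<noteq> 0"
  and Sdef: "S = {\<alpha> *\<^sub>R u + \<beta> *\<^sub>R I | I. I \<in> SA u M c}"
  and SO: "S \<subseteq> Om"
  and hf: "\<And>I. I \<in> SA u M c \<Longrightarrow> f (\<alpha> *\<^sub>R u + \<beta> *\<^sub>R I) = A1 + \<beta> *\<^sub>R (I \<odot> a)"
  and hg: "\<And>I. I \<in> SA u M c \<Longrightarrow> g (\<alpha> *\<^sub>R u + \<beta> *\<^sub>R I) = B1 + \<beta> *\<^sub>R (I \<odot> d)"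
  and hh: "\<And>I. I \<in> SA u M c \<Longrightarrow> h (\<alpha> *\<^sub>R u + \<beta> *\<^sub>R I) = (A1 \<odot> B1 - (\<beta> * \<beta>) *\<^sub>R (a \<odot> d)) + \<beta> *\<^sub>R (I \<odot> hd)"
  and hd: "hd = A1 \<odot> d + a \<odot> B1"
  and Vf: "Vf = {x \<in> Om. f x = 0}" and Vg: "Vg = {x \<in> Om. g x = 0}" and Vh: "Vh = {x \<in> Om. h x = 0}"
  and CAa: "a \<in> CA u M c" and CAd: "d \<in> CA u M c" and CAh: "hd \<in> CA u M c"
begin

lemma inS: "I \<in> SA u M c \<Longrightarrow> \<alpha> *\<^sub>R u + \<beta> *\<^sub>R I \<in> S" using Sdef by blast

lemma S_cases: "y \<in> S \<Longrightarrow> (\<And>I. I \<in> SA u M c \<Longrightarrow> y = \<alpha> *\<^sub>R u + \<beta> *\<^sub>R I \<Longrightarrow> P) \<Longrightarrow> P"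
  using Sdef by blast

lemma two_pts: "\<alpha> *\<^sub>R u + \<beta> *\<^sub>R J \<noteq> \<alpha> *\<^sub>R u + \<beta> *\<^sub>R (- J)"
proof
  assume "\<alpha> *\<^sub>R u + \<beta> *\<^sub>R J = \<alpha> *\<^sub>R u + \<beta> *\<^sub>R (- J)"
  hence e: "\<beta> *\<^sub>R J = - (\<beta> *\<^sub>R J)" by simp
  have "\<beta> *\<^sub>R J + \<beta> *\<^sub>R J = 0" by (metis e right_minus)
  hence "2 *\<^sub>R (\<beta> *\<^sub>R J) = 0" by (simp only: scaleR_2)
  thus False using b SA_nz[OF u J] by simp
qed

lemma im_pt: "I \<in> SA u M c \<Longrightarrow> im c (\<alpha> *\<^sub>R u + \<beta> *\<^sub>R I) = \<beta> *\<^sub>R I"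
  unfolding im_def re_def using tr_rep[of I \<alpha> \<beta>] by (simp add: scaleR_2[symmetric])

lemma cpt: "I \<in> SA u M c \<Longrightarrow> c (\<alpha> *\<^sub>R u + \<beta> *\<^sub>R I) = \<alpha> *\<^sub>R u - \<beta> *\<^sub>R I"
  using SA_c[of I] by simp

lemma single_nz:
  assumes "S \<inter> {x \<in> Om. k x = 0} = {y}" and hk: "\<And>I. I \<in> SA u M c \<Longrightarrow> k (\<alpha> *\<^sub>R u + \<beta> *\<^sub>R I) = K1 + \<beta> *\<^sub>R (I \<odot> e)"
  and y: "y = \<alpha> *\<^sub>R u + \<beta> *\<^sub>R I1" "I1 \<in> SA u M c"
  shows "e \<noteq> 0"
proof
  assume e: "e = 0"
  have "k y = 0" using assms(1) by blast
  hence K: "K1 = 0" using hk[OF y(2)] y(1) e by simp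
  have "\<alpha> *\<^sub>R u + \<beta> *\<^sub>R J \<in> S \<inter> {x \<in> Om. k x = 0}" "\<alpha> *\<^sub>R u + \<beta> *\<^sub>R (- J) \<in> S \<inter> {x \<in> Om. k x = 0}"
    using inS[OF J] inS[OF SA_neg[OF J]] SO hk[OF J] hk[OF SA_neg[OF J]] K e by auto
  thus False using assms(1) two_pts by auto
qed

lemma case2: assumes fy: "S \<inter> Vf = {y}" and g0: "S \<inter> Vg = {}"
  shows "S \<inter> Vh \<subseteq> {M (M (M y a) B1 - M (M y (M (im c y) a)) d)
                                (ainv u M (M a B1 - M (M (im c y) a) d))}"
proof
  fix w assume w: "w \<in> S \<inter> Vh"
  have yS: "y \<in> S" and fy0: "f y = 0" using fy Vf by auto
  obtain I1 where I1: "I1 \<in> SA u M c" and yI: "y = \<alpha> *\<^sub>R u + \<beta> *\<^sub>R I1" using yS S_cases by blast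
  obtain K where K: "K \<in> SA u M c" and wK: "w = \<alpha> *\<^sub>R u + \<beta> *\<^sub>R K" using w S_cases by blast
  have A1: "A1 = - (\<beta> *\<^sub>R (I1 \<odot> a))" using fy0 hf[OF I1] yI by (simp add: eq_neg_iff_add_eq_0)
  have imy: "im c y = \<beta> *\<^sub>R I1" using im_pt[OF I1] yI by simp
  have den: "M a B1 - M (M (im c y) a) d = hd" using hd A1 imy by simp
  have hw: "h w = 0" using w Vh by auto
  have hs: "\<beta> *\<^sub>R (K \<odot> hd) + (A1 \<odot> B1 - (\<beta> * \<beta>) *\<^sub>R (a \<odot> d)) = 0"
    using hw hh[OF K] wK by (simp add: add.commute)
  have hK: "\<beta> *\<^sub>R (K \<odot> hd) = - (A1 \<odot> B1 - (\<beta> * \<beta>) *\<^sub>R (a \<odot> d))"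
    using hs by (metis add_diff_cancel_right' diff_0)
  have num: "M (M y a) B1 - M (M y (M (im c y) a)) d = w \<odot> hd"
  proof -
    have e2: "w \<odot> hd = \<alpha> *\<^sub>R hd - (A1 \<odot> B1 - (\<beta> * \<beta>) *\<^sub>R (a \<odot> d))" using wK hK by simp
    have e1: "M (M y a) B1 - M (M y (M (im c y) a)) d = \<alpha> *\<^sub>R hd - (A1 \<odot> B1 - (\<beta> * \<beta>) *\<^sub>R (a \<odot> d))"
      unfolding yI hd A1 im_pt[OF I1] using SA_JJ[OF I1, of a] by (simp add: algebra_simps)
    show ?thesis using e1 e2 by simp
  qed
  show "w \<in> {M (M (M y a) B1 - M (M y (M (im c y) a)) d) (ainv u M (M a B1 - M (M (im c y) a) d))}"
  proof (cases "hd = 0")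
    case False
    then obtain N Ni where gh: "good hd N Ni" using CA_good[OF CAh] by blast
    show ?thesis unfolding num den ainv_eq[OF gh] inv1[OF gh] by simp
  next
    case True
    have anz: "a \<noteq> 0" using single_nz[OF fy[unfolded Vf] hf yI I1] .
    then obtain Na Nai where ga: "good a Na Nai" using CA_good[OF CAa] by blast
    have aB: "a \<odot> B1 = \<beta> *\<^sub>R ((I1 \<odot> a) \<odot> d)" using True hd A1 by (simp add: eq_neg_iff_add_eq_0 add.commute)
    have False
    proof (cases "d = 0")
      case True
      hence "a \<odot> B1 = a \<odot> 0" using aB by simp
      hence "B1 = 0" using lcancel[OF ga] by blast
      hence "\<alpha> *\<^sub>R u + \<beta> *\<^sub>R I1 \<in> S \<inter> Vg" using inS[OF I1] SO hg[OF I1] True Vg by auto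
      thus False using g0 by blast
    next
      case False
      then obtain Nd Ndi where gd: "good d Nd Ndi" using CA_good[OF CAd] by blast
      let ?Y = "(Nai \<odot> c a) \<odot> ((I1 \<odot> a) \<odot> d)"
      let ?K = "?Y \<odot> (Ndi \<odot> c d)"
      have KS: "?K \<in> SA u M c" by (rule SA2[OF ga gd I1])
      have B1: "B1 = \<beta> *\<^sub>R ?Y" using inv4[OF ga, of B1] aB by simp
      have "g (\<alpha> *\<^sub>R u + \<beta> *\<^sub>R (- ?K)) = 0" using hg[OF SA_neg[OF KS]] B1 inv6[OF gd, of ?Y] by simp
      hence "\<alpha> *\<^sub>R u + \<beta> *\<^sub>R (- ?K) \<in> S \<inter> Vg" using inS[OF SA_neg[OF KS]] SO Vg by auto
      thus False using g0 by blast
    qed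
    thus ?thesis ..
  qed
qed


lemma case3: assumes f0: "S \<inter> Vf = {}" and gz: "S \<inter> Vg = {z}"
  shows "S \<inter> Vh \<subseteq> {M (M A1 (M z d) - M a (M z (M (im c z) d))) (ainv u M (M A1 d - M a (M (im c z) d)))}"
proof
  fix w assume w: "w \<in> S \<inter> Vh"
  have zS: "z \<in> S" and gz0: "g z = 0" using gz Vg by auto
  obtain I2 where I2: "I2 \<in> SA u M c" and zI: "z = \<alpha> *\<^sub>R u + \<beta> *\<^sub>R I2" using zS S_cases by blast
  obtain K where K: "K \<in> SA u M c" and wK: "w = \<alpha> *\<^sub>R u + \<beta> *\<^sub>R K" using w S_cases by blast
  have B1: "B1 = - (\<beta> *\<^sub>R (I2 \<odot> d))" using gz0 hg[OF I2] zI by (simp add: eq_neg_iff_add_eq_0)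
  have imz: "im c z = \<beta> *\<^sub>R I2" using im_pt[OF I2] zI by simp
  have den: "M A1 d - M a (M (im c z) d) = hd" using hd B1 imz by simp
  have hw: "h w = 0" using w Vh by auto
  have hs: "\<beta> *\<^sub>R (K \<odot> hd) + (A1 \<odot> B1 - (\<beta> * \<beta>) *\<^sub>R (a \<odot> d)) = 0"
    using hw hh[OF K] wK by (simp add: add.commute)
  have hK: "\<beta> *\<^sub>R (K \<odot> hd) = - (A1 \<odot> B1 - (\<beta> * \<beta>) *\<^sub>R (a \<odot> d))"
    using hs by (metis add_diff_cancel_right' diff_0)
  have num: "M A1 (M z d) - M a (M z (M (im c z) d)) = w \<odot> hd"
  proof -
    have e2: "w \<odot> hd = \<alpha> *\<^sub>R hd - (A1 \<odot> B1 - (\<beta> * \<beta>) *\<^sub>R (a \<odot> d))" using wK hK by simp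
    have e1: "M A1 (M z d) - M a (M z (M (im c z) d)) = \<alpha> *\<^sub>R hd - (A1 \<odot> B1 - (\<beta> * \<beta>) *\<^sub>R (a \<odot> d))"
      unfolding zI hd B1 im_pt[OF I2] using SA_JJ[OF I2, of d] by (simp add: algebra_simps)
    show ?thesis using e1 e2 by simp
  qed
  show "w \<in> {M (M A1 (M z d) - M a (M z (M (im c z) d))) (ainv u M (M A1 d - M a (M (im c z) d)))}"
  proof (cases "hd = 0")
    case False
    then obtain N Ni where gh: "good hd N Ni" using CA_good[OF CAh] by blast
    show ?thesis unfolding num den ainv_eq[OF gh] inv1[OF gh] by simp
  next
    case True
    have dnz: "d \<noteq> 0" using single_nz[OF gz[unfolded Vg] hg zI I2] .
    then obtain Nd Ndi where gd: "good d Nd Ndi" using CA_good[OF CAd] by blast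
    have Ad: "A1 \<odot> d = \<beta> *\<^sub>R (a \<odot> (I2 \<odot> d))" using True hd B1 by (simp add: eq_neg_iff_add_eq_0 add.commute)
    have False
    proof (cases "a = 0")
      case True
      hence "A1 \<odot> d = 0 \<odot> d" using Ad by simp
      hence "A1 = 0" using rcancel[OF gd] by blast
      hence "\<alpha> *\<^sub>R u + \<beta> *\<^sub>R J \<in> S \<inter> Vf" using inS[OF J] SO hf[OF J] True Vf by auto
      thus False using f0 by blast
    next
      case False
      then obtain Na Nai where ga: "good a Na Nai" using CA_good[OF CAa] by blast
      let ?Y = "(a \<odot> (I2 \<odot> d)) \<odot> (Ndi \<odot> c d)"
      let ?K = "?Y \<odot> (Nai \<odot> c a)"
      have KS: "?K \<in> SA u M c" by (rule SA3[OF ga gd I2])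
      have A1: "A1 = \<beta> *\<^sub>R ?Y" using inv1[OF gd, of A1] Ad by simp
      have "f (\<alpha> *\<^sub>R u + \<beta> *\<^sub>R (- ?K)) = 0" using hf[OF SA_neg[OF KS]] A1 inv6[OF ga, of ?Y] by simp
      hence "\<alpha> *\<^sub>R u + \<beta> *\<^sub>R (- ?K) \<in> S \<inter> Vf" using inS[OF SA_neg[OF KS]] SO Vf by auto
      thus False using f0 by blast
    qed
    thus ?thesis ..
  qed
qed

lemma case4: assumes fy: "S \<inter> Vf = {y}" and gz: "S \<inter> Vg = {z}"
  shows "hd = M (M (c y) a) d - M a (M z d)
                  \<and> (hd = 0 \<longrightarrow> S \<subseteq> Vh)
                  \<and> (hd \<noteq> 0 \<longrightarrow>
                       S \<inter> Vh \<subseteq> {M (M (M ((\<alpha> * \<alpha> + \<beta> * \<beta>) *\<^sub>R u) a) d - M (M y a) (M z d)) (ainv u M hd)})"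
proof -
  have yS: "y \<in> S" and fy0: "f y = 0" using fy Vf by auto
  obtain I1 where I1: "I1 \<in> SA u M c" and yI: "y = \<alpha> *\<^sub>R u + \<beta> *\<^sub>R I1" using yS S_cases by blast
  have zS: "z \<in> S" and gz0: "g z = 0" using gz Vg by auto
  obtain I2 where I2: "I2 \<in> SA u M c" and zI: "z = \<alpha> *\<^sub>R u + \<beta> *\<^sub>R I2" using zS S_cases by blast
  have A1: "A1 = - (\<beta> *\<^sub>R (I1 \<odot> a))" using fy0 hf[OF I1] yI by (simp add: eq_neg_iff_add_eq_0)
  have B1: "B1 = - (\<beta> *\<^sub>R (I2 \<odot> d))" using gz0 hg[OF I2] zI by (simp add: eq_neg_iff_add_eq_0)
  have hd2: "hd = - (\<beta> *\<^sub>R ((I1 \<odot> a) \<odot> d + a \<odot> (I2 \<odot> d)))" using hd A1 B1 by (simp add: scaleR_right_distrib)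
  have P1: "hd = M (M (c y) a) d - M a (M z d)"
    unfolding hd2 yI zI cpt[OF I1] by (simp add: algebra_simps)
  have P2: "hd = 0 \<longrightarrow> S \<subseteq> Vh"
  proof
    assume h0: "hd = 0"
    have sum0: "(I1 \<odot> a) \<odot> d = - (a \<odot> (I2 \<odot> d))" using h0 hd2 b by (simp add: eq_neg_iff_add_eq_0)
    have key: "(I1 \<odot> a) \<odot> (I2 \<odot> d) = a \<odot> d"
    proof (cases "d = 0")
      case True thus ?thesis by simp
    next
      case False
      then obtain Nd Ndi where gd: "good d Nd Ndi" using CA_good[OF CAd] by blast
      show ?thesis by (rule M4a[OF gd I1 I2 sum0])
    qed
    show "S \<subseteq> Vh"
    proof
      fix w assume w: "w \<in> S"
      then obtain K where K: "K \<in> SA u M c" and wK: "w = \<alpha> *\<^sub>R u + \<beta> *\<^sub>R K" using S_cases by blast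
      have "h w = 0" using hh[OF K] wK h0 A1 B1 key by simp
      thus "w \<in> Vh" using w SO Vh by auto
    qed
  qed
  have P3: "hd \<noteq> 0 \<longrightarrow> S \<inter> Vh \<subseteq> {M (M (M ((\<alpha> * \<alpha> + \<beta> * \<beta>) *\<^sub>R u) a) d - M (M y a) (M z d)) (ainv u M hd)}"
  proof (intro impI subsetI)
    assume hnz: "hd \<noteq> 0"
    then obtain N Ni where gh: "good hd N Ni" using CA_good[OF CAh] by blast
    fix w assume w: "w \<in> S \<inter> Vh"
    obtain K where K: "K \<in> SA u M c" and wK: "w = \<alpha> *\<^sub>R u + \<beta> *\<^sub>R K" using w S_cases by blast
    have hw: "h w = 0" using w Vh by auto
    have hs: "\<beta> *\<^sub>R (K \<odot> hd) + (A1 \<odot> B1 - (\<beta> * \<beta>) *\<^sub>R (a \<odot> d)) = 0"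
      using hw hh[OF K] wK by (simp add: add.commute)
    have hK: "\<beta> *\<^sub>R (K \<odot> hd) = - (A1 \<odot> B1 - (\<beta> * \<beta>) *\<^sub>R (a \<odot> d))"
      using hs by (metis add_diff_cancel_right' diff_0)
    have e2: "w \<odot> hd = \<alpha> *\<^sub>R hd - (A1 \<odot> B1 - (\<beta> * \<beta>) *\<^sub>R (a \<odot> d))" using wK hK by simp
    have e1: "M (M ((\<alpha> * \<alpha> + \<beta> * \<beta>) *\<^sub>R u) a) d - M (M y a) (M z d) = \<alpha> *\<^sub>R hd - (A1 \<odot> B1 - (\<beta> * \<beta>) *\<^sub>R (a \<odot> d))"
      unfolding hd2 yI zI A1 B1 by (simp add: algebra_simps)
    show "w \<in> {M (M (M ((\<alpha> * \<alpha> + \<beta> * \<beta>) *\<^sub>R u) a) d - M (M y a) (M z d)) (ainv u M hd)}"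
      unfolding e1 e2[symmetric] ainv_eq[OF gh] inv1[OF gh] by simp
  qed
  show ?thesis using P1 P2 P3 by blast
qed

end

lemma Omega_cases:
  assumes "x \<in> Omega u M c D"
  obtains \<alpha> \<beta> J where "x = \<alpha> *\<^sub>R u + \<beta> *\<^sub>R J" "Complex \<alpha> \<beta> \<in> D" "J \<in> SA u M c"
  using assms unfolding Omega_def by blast

lemma main:
  assumes SA_ne: "SA u M c \<noteq> {}"
    and D_ne: "D \<noteq> {}"
    and D_cnj: "\<forall>z\<in>D. cnj z \<in> D"
    and F: "stem D F" and G: "stem D G"
    and f: "induces u M c D F f" and g: "induces u M c D G g"
    and h: "induces u M c D (stem_mul M F G) h"
  shows "(\<forall>x \<in> Omega u M c D \<inter> realA u.
            x \<in> Vz u M c D f \<union> Vz u M c D g \<longrightarrow> x \<in> Vz u M c D h)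
       \<and> (\<forall>x \<in> Omega u M c D.
            sphere u M c x \<subseteq> Vz u M c D f \<or> sphere u M c x \<subseteq> Vz u M c D g
              \<longrightarrow> sphere u M c x \<subseteq> Vz u M c D h)
       \<and> (\<forall>x \<in> Omega u M c D - realA u.
            (let S = sphere u M c x; Vf = Vz u M c D f; Vg = Vz u M c D g; Vh = Vz u M c D h;
                 f0 = sph_val c f x; g0 = sph_val c g x;
                 fd = sph_der u M c f x; gd = sph_der u M c g x; hd = sph_der u M c h x
             in fd \<in> CA u M c \<and> gd \<in> CA u M c \<and> hd \<in> CA u M c \<longrightarrow>
               (\<forall>y. S \<inter> Vf = {y} \<and> S \<inter> Vg = {} \<longrightarrow>
                  S \<inter> Vh \<subseteq> {M (M (M y fd) g0 - M (M y (M (im c y) fd)) gd)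
                                (ainv u M (M fd g0 - M (M (im c y) fd) gd))})
             \<and> (\<forall>z. S \<inter> Vf = {} \<and> S \<inter> Vg = {z} \<longrightarrow>
                  S \<inter> Vh \<subseteq> {M (M f0 (M z gd) - M fd (M z (M (im c z) gd)))
                                (ainv u M (M f0 gd - M fd (M (im c z) gd)))})
             \<and> (\<forall>y z. S \<inter> Vf = {y} \<and> S \<inter> Vg = {z} \<longrightarrow>
                  hd = M (M (c y) fd) gd - M fd (M z gd)
                  \<and> (hd = 0 \<longrightarrow> S \<subseteq> Vh)
                  \<and> (hd \<noteq> 0 \<longrightarrow>
                       S \<inter> Vh \<subseteq> {M (M (M (nm M c x) fd) gd - M (M y fd) (M z gd)) (ainv u M hd)}))))"
proof (cases "u = 0")
  case True
  have z: "\<And>x::'a. x = 0" using all0[OF True] .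
  have nr: "Omega u M c D - realA u = {}" using z[of "0 *\<^sub>R u"] z by (auto simp: realA_def)
  have hz: "\<And>y. h y = 0" by (rule z)
  have allO: "\<And>x y. x \<in> Omega u M c D \<Longrightarrow> y \<in> Omega u M c D"
  proof -
    fix x y assume "x \<in> Omega u M c D"
    moreover have "x = y" using z[of x] z[of y] by simp
    ultimately show "y \<in> Omega u M c D" by simp
  qed
  have Q1: "\<forall>x \<in> Omega u M c D \<inter> realA u. x \<in> Vz u M c D f \<union> Vz u M c D g \<longrightarrow> x \<in> Vz u M c D h"
    by (simp add: Vz_def hz)
  have Q2: "\<forall>x \<in> Omega u M c D. sphere u M c x \<subseteq> Vz u M c D f \<or> sphere u M c x \<subseteq> Vz u M c D g
              \<longrightarrow> sphere u M c x \<subseteq> Vz u M c D h"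
  proof (intro ballI impI subsetI)
    fix x y assume "x \<in> Omega u M c D" "y \<in> sphere u M c x"
    thus "y \<in> Vz u M c D h" using allO[of x y] hz[of y] by (simp add: Vz_def)
  qed
  show ?thesis using Q1 Q2 nr by blast
next
  case False
  note u = False
  have H: "stem D (stem_mul M F G)" using stem_mul_stem[OF F G] .
  have P1: "\<forall>x \<in> Omega u M c D \<inter> realA u.
            x \<in> Vz u M c D f \<union> Vz u M c D g \<longrightarrow> x \<in> Vz u M c D h"
  proof (intro ballI impI)
    fix x assume xOR: "x \<in> Omega u M c D \<inter> realA u" and xV: "x \<in> Vz u M c D f \<union> Vz u M c D g"
    then obtain \<alpha> \<beta> J where x: "x = \<alpha> *\<^sub>R u + \<beta> *\<^sub>R J" and zD: "Complex \<alpha> \<beta> \<in> D" and J: "J \<in> SA u M c"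
      by (meson IntD1 Omega_cases)
    have zc: "Complex \<alpha> (- \<beta>) \<in> D" using D_cnj zD by (metis complex_cnj complex.sel)
    have b0: "\<beta> = 0" using real_rep[OF u J, of \<alpha> \<beta>] xOR x by blast
    have A2: "snd (F (Complex \<alpha> \<beta>)) = 0" using slice_vals(4)[OF u F f zD zc J b0] .
    have B2: "snd (G (Complex \<alpha> \<beta>)) = 0" using slice_vals(4)[OF u G g zD zc J b0] .
    have fx: "f x = fst (F (Complex \<alpha> \<beta>))" using slice_vals(1)[OF u F f zD zc J J] x A2 by simp
    have gx: "g x = fst (G (Complex \<alpha> \<beta>))" using slice_vals(1)[OF u G g zD zc J J] x B2 by simp
    have hx: "h x = fst (F (Complex \<alpha> \<beta>)) \<odot> fst (G (Complex \<alpha> \<beta>))"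
      using slice_vals(1)[OF u H h zD zc J J] x A2 B2 by (simp add: stem_mul_def)
    show "x \<in> Vz u M c D h" using xV xOR fx gx hx by (auto simp: Vz_def)
  qed
  have P2: "\<forall>x \<in> Omega u M c D.
            sphere u M c x \<subseteq> Vz u M c D f \<or> sphere u M c x \<subseteq> Vz u M c D g
              \<longrightarrow> sphere u M c x \<subseteq> Vz u M c D h"
  proof (intro ballI impI)
    fix x assume xO: "x \<in> Omega u M c D"
      and hyp: "sphere u M c x \<subseteq> Vz u M c D f \<or> sphere u M c x \<subseteq> Vz u M c D g"
    then obtain \<alpha> \<beta> J where x: "x = \<alpha> *\<^sub>R u + \<beta> *\<^sub>R J" and zD: "Complex \<alpha> \<beta> \<in> D" and J: "J \<in> SA u M c"
      by (meson Omega_cases)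
    have zc: "Complex \<alpha> (- \<beta>) \<in> D" using D_cnj zD by (metis complex_cnj complex.sel)
    have Sx: "sphere u M c x = {\<alpha> *\<^sub>R u + \<beta> *\<^sub>R I | I. I \<in> SA u M c}" using sphere_eq[OF u J] x by simp
    have SO: "sphere u M c x \<subseteq> Omega u M c D" using Sx zD unfolding Omega_def by blast
    have pJ: "\<alpha> *\<^sub>R u + \<beta> *\<^sub>R J \<in> sphere u M c x" "\<alpha> *\<^sub>R u + \<beta> *\<^sub>R (- J) \<in> sphere u M c x"
      using Sx J SA_neg[OF J] by blast+
    have zero: "P1 = 0 \<and> P2 = 0" if "P1 + J \<odot> P2 = 0" "P1 + (- J) \<odot> P2 = 0" for P1 P2
    proof -
      have s2: "P1 - J \<odot> P2 = 0" using that(2) by simp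
      have "P1 + P1 = (P1 + J \<odot> P2) + (P1 - J \<odot> P2)" by (simp add: algebra_simps)
      also have "\<dots> = 0" using that(1) s2 by simp
      finally have "P1 + P1 = 0" .
      hence "2 *\<^sub>R P1 = 0" by (simp only: scaleR_2)
      hence p1: "P1 = 0" by simp
      hence "J \<odot> P2 = 0" using that by simp
      hence "J \<odot> (J \<odot> P2) = 0" by simp
      thus ?thesis using SA_JJ[OF J] p1 by simp
    qed
    have fI: "\<And>I. I \<in> SA u M c \<Longrightarrow> f (\<alpha> *\<^sub>R u + \<beta> *\<^sub>R I) = fst (F (Complex \<alpha> \<beta>)) + I \<odot> snd (F (Complex \<alpha> \<beta>))"
      by (rule slice_vals(1)[OF u F f zD zc J])
    have gI: "\<And>I. I \<in> SA u M c \<Longrightarrow> g (\<alpha> *\<^sub>R u + \<beta> *\<^sub>R I) = fst (G (Complex \<alpha> \<beta>)) + I \<odot> snd (G (Complex \<alpha> \<beta>))"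
      by (rule slice_vals(1)[OF u G g zD zc J])
    have hI: "\<And>I. I \<in> SA u M c \<Longrightarrow> h (\<alpha> *\<^sub>R u + \<beta> *\<^sub>R I) =
        (fst (F (Complex \<alpha> \<beta>)) \<odot> fst (G (Complex \<alpha> \<beta>)) - snd (F (Complex \<alpha> \<beta>)) \<odot> snd (G (Complex \<alpha> \<beta>)))
        + I \<odot> (fst (F (Complex \<alpha> \<beta>)) \<odot> snd (G (Complex \<alpha> \<beta>)) + snd (F (Complex \<alpha> \<beta>)) \<odot> fst (G (Complex \<alpha> \<beta>)))"
      using slice_vals(1)[OF u H h zD zc J] by (simp add: stem_mul_def)
    have "(fst (F (Complex \<alpha> \<beta>)) = 0 \<and> snd (F (Complex \<alpha> \<beta>)) = 0) \<or> (fst (G (Complex \<alpha> \<beta>)) = 0 \<and> snd (G (Complex \<alpha> \<beta>)) = 0)"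
    proof (cases "sphere u M c x \<subseteq> Vz u M c D f")
      case True
      hence "f (\<alpha> *\<^sub>R u + \<beta> *\<^sub>R J) = 0" "f (\<alpha> *\<^sub>R u + \<beta> *\<^sub>R (- J)) = 0" using pJ by (auto simp: Vz_def)
      thus ?thesis using fI[OF J] fI[OF SA_neg[OF J]] zero[of "fst (F (Complex \<alpha> \<beta>))" "snd (F (Complex \<alpha> \<beta>))"] by simp
    next
      case False
      hence "sphere u M c x \<subseteq> Vz u M c D g" using hyp by blast
      hence "g (\<alpha> *\<^sub>R u + \<beta> *\<^sub>R J) = 0" "g (\<alpha> *\<^sub>R u + \<beta> *\<^sub>R (- J)) = 0" using pJ by (auto simp: Vz_def)
      thus ?thesis using gI[OF J] gI[OF SA_neg[OF J]] zero[of "fst (G (Complex \<alpha> \<beta>))" "snd (G (Complex \<alpha> \<beta>))"] by simp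
    qed
    hence h0: "\<And>I. I \<in> SA u M c \<Longrightarrow> h (\<alpha> *\<^sub>R u + \<beta> *\<^sub>R I) = 0" using hI by auto
    show "sphere u M c x \<subseteq> Vz u M c D h"
      using SO h0 unfolding Sx Vz_def by blast
  qed
  have P3: "\<forall>x \<in> Omega u M c D - realA u.
            (let S = sphere u M c x; Vf = Vz u M c D f; Vg = Vz u M c D g; Vh = Vz u M c D h;
                 f0 = sph_val c f x; g0 = sph_val c g x;
                 fd = sph_der u M c f x; gd = sph_der u M c g x; hd = sph_der u M c h x
             in fd \<in> CA u M c \<and> gd \<in> CA u M c \<and> hd \<in> CA u M c \<longrightarrow>
               (\<forall>y. S \<inter> Vf = {y} \<and> S \<inter> Vg = {} \<longrightarrow>
                  S \<inter> Vh \<subseteq> {M (M (M y fd) g0 - M (M y (M (im c y) fd)) gd)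
                                (ainv u M (M fd g0 - M (M (im c y) fd) gd))})
             \<and> (\<forall>z. S \<inter> Vf = {} \<and> S \<inter> Vg = {z} \<longrightarrow>
                  S \<inter> Vh \<subseteq> {M (M f0 (M z gd) - M fd (M z (M (im c z) gd)))
                                (ainv u M (M f0 gd - M fd (M (im c z) gd)))})
             \<and> (\<forall>y z. S \<inter> Vf = {y} \<and> S \<inter> Vg = {z} \<longrightarrow>
                  hd = M (M (c y) fd) gd - M fd (M z gd)
                  \<and> (hd = 0 \<longrightarrow> S \<subseteq> Vh)
                  \<and> (hd \<noteq> 0 \<longrightarrow>
                       S \<inter> Vh \<subseteq> {M (M (M (nm M c x) fd) gd - M (M y fd) (M z gd)) (ainv u M hd)})))"
  proof (intro ballI)
    fix x assume xOR: "x \<in> Omega u M c D - realA u"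
    then obtain \<alpha> \<beta> J where x: "x = \<alpha> *\<^sub>R u + \<beta> *\<^sub>R J" and zD: "Complex \<alpha> \<beta> \<in> D" and J: "J \<in> SA u M c"
      by (meson DiffD1 Omega_cases)
    have zc: "Complex \<alpha> (- \<beta>) \<in> D" using D_cnj zD by (metis complex_cnj complex.sel)
    have b: "\<beta> \<noteq> 0"
    proof
      assume "\<beta> = 0"
      hence "x = (\<lambda>r. r *\<^sub>R u) \<alpha>" using x by simp
      hence "x \<in> realA u" unfolding realA_def by blast
      thus False using xOR by blast
    qed
    define A1 where "A1 = fst (F (Complex \<alpha> \<beta>))"
    define A2 where "A2 = snd (F (Complex \<alpha> \<beta>))"
    define B1 where "B1 = fst (G (Complex \<alpha> \<beta>))"
    define B2 where "B2 = snd (G (Complex \<alpha> \<beta>))"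
    define a where "a = (1 / \<beta>) *\<^sub>R A2"
    define d where "d = (1 / \<beta>) *\<^sub>R B2"
    define hd0 where "hd0 = A1 \<odot> d + a \<odot> B1"
    have A2: "A2 = \<beta> *\<^sub>R a" using b by (simp add: a_def)
    have B2: "B2 = \<beta> *\<^sub>R d" using b by (simp add: d_def)
    have fdq: "sph_der u M c f x = a" using slice_vals(3)[OF u F f zD zc J b] x by (simp add: a_def A2_def)
    have gdq: "sph_der u M c g x = d" using slice_vals(3)[OF u G g zD zc J b] x by (simp add: d_def B2_def)
    have "sph_der u M c h x = (1 / \<beta>) *\<^sub>R (A1 \<odot> B2 + A2 \<odot> B1)"
      using slice_vals(3)[OF u H h zD zc J b] x by (simp add: stem_mul_def A1_def A2_def B1_def B2_def)
    hence hdq: "sph_der u M c h x = hd0" unfolding hd0_def A2 B2 using b by (simp add: scaleR_right_distrib)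
    have f0q: "sph_val c f x = A1" using slice_vals(2)[OF u F f zD zc J] x by (simp add: A1_def)
    have g0q: "sph_val c g x = B1" using slice_vals(2)[OF u G g zD zc J] x by (simp add: B1_def)
    have nmx: "nm M c x = (\<alpha> * \<alpha> + \<beta> * \<beta>) *\<^sub>R u"
      unfolding nm_def x using SA_c[OF J] SA_sq[OF J] by (simp add: algebra_simps)
    have Sx: "sphere u M c x = {\<alpha> *\<^sub>R u + \<beta> *\<^sub>R I | I. I \<in> SA u M c}" using sphere_eq[OF u J] x by simp
    have SO: "sphere u M c x \<subseteq> Omega u M c D" using Sx zD unfolding Omega_def by blast
    have hf: "\<And>I. I \<in> SA u M c \<Longrightarrow> f (\<alpha> *\<^sub>R u + \<beta> *\<^sub>R I) = A1 + \<beta> *\<^sub>R (I \<odot> a)"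
      using slice_vals(1)[OF u F f zD zc J] A2 by (simp add: A1_def A2_def)
    have hg: "\<And>I. I \<in> SA u M c \<Longrightarrow> g (\<alpha> *\<^sub>R u + \<beta> *\<^sub>R I) = B1 + \<beta> *\<^sub>R (I \<odot> d)"
      using slice_vals(1)[OF u G g zD zc J] B2 by (simp add: B1_def B2_def)
    have hh: "\<And>I. I \<in> SA u M c \<Longrightarrow> h (\<alpha> *\<^sub>R u + \<beta> *\<^sub>R I) = (A1 \<odot> B1 - (\<beta> * \<beta>) *\<^sub>R (a \<odot> d)) + \<beta> *\<^sub>R (I \<odot> hd0)"
    proof -
      fix I assume I: "I \<in> SA u M c"
      have "h (\<alpha> *\<^sub>R u + \<beta> *\<^sub>R I) = (A1 \<odot> B1 - A2 \<odot> B2) + I \<odot> (A1 \<odot> B2 + A2 \<odot> B1)"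
        using slice_vals(1)[OF u H h zD zc J I] by (simp add: stem_mul_def A1_def A2_def B1_def B2_def)
      thus "h (\<alpha> *\<^sub>R u + \<beta> *\<^sub>R I) = (A1 \<odot> B1 - (\<beta> * \<beta>) *\<^sub>R (a \<odot> d)) + \<beta> *\<^sub>R (I \<odot> hd0)"
        unfolding A2 B2 hd0_def by (simp add: scaleR_right_distrib)
    qed
    have VfD: "Vz u M c D f = {x \<in> Omega u M c D. f x = 0}" by (simp add: Vz_def)
    have VgD: "Vz u M c D g = {x \<in> Omega u M c D. g x = 0}" by (simp add: Vz_def)
    have VhD: "Vz u M c D h = {x \<in> Omega u M c D. h x = 0}" by (simp add: Vz_def)
    show "let S = sphere u M c x; Vf = Vz u M c D f; Vg = Vz u M c D g; Vh = Vz u M c D h;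
                 f0 = sph_val c f x; g0 = sph_val c g x;
                 fd = sph_der u M c f x; gd = sph_der u M c g x; hd = sph_der u M c h x
             in fd \<in> CA u M c \<and> gd \<in> CA u M c \<and> hd \<in> CA u M c \<longrightarrow>
               (\<forall>y. S \<inter> Vf = {y} \<and> S \<inter> Vg = {} \<longrightarrow>
                  S \<inter> Vh \<subseteq> {M (M (M y fd) g0 - M (M y (M (im c y) fd)) gd)
                                (ainv u M (M fd g0 - M (M (im c y) fd) gd))})
             \<and> (\<forall>z. S \<inter> Vf = {} \<and> S \<inter> Vg = {z} \<longrightarrow>
                  S \<inter> Vh \<subseteq> {M (M f0 (M z gd) - M fd (M z (M (im c z) gd)))
                                (ainv u M (M f0 gd - M fd (M (im c z) gd)))})
             \<and> (\<forall>y z. S \<inter> Vf = {y} \<and> S \<inter> Vg = {z} \<longrightarrow>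
                  hd = M (M (c y) fd) gd - M fd (M z gd)
                  \<and> (hd = 0 \<longrightarrow> S \<subseteq> Vh)
                  \<and> (hd \<noteq> 0 \<longrightarrow>
                       S \<inter> Vh \<subseteq> {M (M (M (nm M c x) fd) gd - M (M y fd) (M z gd)) (ainv u M hd)}))"
      unfolding Let_def fdq gdq hdq f0q g0q nmx
    proof (intro impI)
      assume CA: "a \<in> CA u M c \<and> d \<in> CA u M c \<and> hd0 \<in> CA u M c"
      hence CAa: "a \<in> CA u M c" and CAd: "d \<in> CA u M c" and CAh: "hd0 \<in> CA u M c" by auto
      note prem = u J b Sx SO hf hg hh hd0_def VfD VgD VhD CAa CAd CAh
      note C2 = case2[OF prem]
      note C3 = case3[OF prem]
      note C4 = case4[OF prem]
      show "(\<forall>y. sphere u M c x \<inter> Vz u M c D f = {y} \<and> sphere u M c x \<inter> Vz u M c D g = {} \<longrightarrow>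
                  sphere u M c x \<inter> Vz u M c D h \<subseteq> {M (M (M y a) B1 - M (M y (M (im c y) a)) d)
                                (ainv u M (M a B1 - M (M (im c y) a) d))})
             \<and> (\<forall>z. sphere u M c x \<inter> Vz u M c D f = {} \<and> sphere u M c x \<inter> Vz u M c D g = {z} \<longrightarrow>
                  sphere u M c x \<inter> Vz u M c D h \<subseteq> {M (M A1 (M z d) - M a (M z (M (im c z) d)))
                                (ainv u M (M A1 d - M a (M (im c z) d)))})
             \<and> (\<forall>y z. sphere u M c x \<inter> Vz u M c D f = {y} \<and> sphere u M c x \<inter> Vz u M c D g = {z} \<longrightarrow>
                  hd0 = M (M (c y) a) d - M a (M z d)
                  \<and> (hd0 = 0 \<longrightarrow> sphere u M c x \<subseteq> Vz u M c D h)
                  \<and> (hd0 \<noteq> 0 \<longrightarrow>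
                       sphere u M c x \<inter> Vz u M c D h \<subseteq> {M (M (M ((\<alpha> * \<alpha> + \<beta> * \<beta>) *\<^sub>R u) a) d - M (M y a) (M z d)) (ainv u M hd0)}))"
        apply (intro conjI)
          apply (intro allI impI)
          apply (rule C2; simp)
         apply (intro allI impI)
         apply (rule C3; simp)
        apply (intro allI impI)
        apply (rule C4; simp)
        done
    qed
  qed
  show ?thesis using P1 P2 P3 by blast
qed

end

theorem theorem5p5:
  fixes u :: "'a::euclidean_space" and M :: "'a \<Rightarrow> 'a \<Rightarrow> 'a" and c :: "'a \<Rightarrow> 'a"
    and D :: "complex set" and F G :: "complex \<Rightarrow> 'a \<times> 'a" and f g h :: "'a \<Rightarrow> 'a"
  assumes alg: "alt_star_algebra u M c"
    and comp: "compatible M c"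
    and SA_ne: "SA u M c \<noteq> {}"
    and D_ne: "D \<noteq> {}"
    and D_cnj: "\<forall>z\<in>D. cnj z \<in> D"
    and F: "stem D F" and G: "stem D G"
    and f: "induces u M c D F f" and g: "induces u M c D G g"
    and h: "induces u M c D (stem_mul M F G) h"
  shows "(\<forall>x \<in> Omega u M c D \<inter> realA u.
            x \<in> Vz u M c D f \<union> Vz u M c D g \<longrightarrow> x \<in> Vz u M c D h)
       \<and> (\<forall>x \<in> Omega u M c D.
            sphere u M c x \<subseteq> Vz u M c D f \<or> sphere u M c x \<subseteq> Vz u M c D g
              \<longrightarrow> sphere u M c x \<subseteq> Vz u M c D h)
       \<and> (\<forall>x \<in> Omega u M c D - realA u.
            (let S = sphere u M c x; Vf = Vz u M c D f; Vg = Vz u M c D g; Vh = Vz u M c D h;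
                 f0 = sph_val c f x; g0 = sph_val c g x;
                 fd = sph_der u M c f x; gd = sph_der u M c g x; hd = sph_der u M c h x
             in fd \<in> CA u M c \<and> gd \<in> CA u M c \<and> hd \<in> CA u M c \<longrightarrow>
               (\<forall>y. S \<inter> Vf = {y} \<and> S \<inter> Vg = {} \<longrightarrow>
                  S \<inter> Vh \<subseteq> {M (M (M y fd) g0 - M (M y (M (im c y) fd)) gd)
                                (ainv u M (M fd g0 - M (M (im c y) fd) gd))})
             \<and> (\<forall>z. S \<inter> Vf = {} \<and> S \<inter> Vg = {z} \<longrightarrow>
                  S \<inter> Vh \<subseteq> {M (M f0 (M z gd) - M fd (M z (M (im c z) gd)))
                                (ainv u M (M f0 gd - M fd (M (im c z) gd)))})
             \<and> (\<forall>y z. S \<inter> Vf = {y} \<and> S \<inter> Vg = {z} \<longrightarrow>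
                  hd = M (M (c y) fd) gd - M fd (M z gd)
                  \<and> (hd = 0 \<longrightarrow> S \<subseteq> Vh)
                  \<and> (hd \<noteq> 0 \<longrightarrow>
                       S \<inter> Vh \<subseteq> {M (M (M (nm M c x) fd) gd - M (M y fd) (M z gd)) (ainv u M hd)}))))"
proof -
  interpret A u M c using alg comp by unfold_locales
  show ?thesis by (rule main[OF SA_ne D_ne D_cnj F G f g h])
qed

end
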